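(* Let $U\subset\mathbb R$ be a closed interval, $f^l,f^r\in C(U;\mathbb R)$, $\mathcal G$ an L1D germ, and $(u^l,u^r)\in\mathcal G$. Let $u_-\in U$ connect to $u^l$ from the left and let $u^r$ connect to $u_+\in U$ from the right. If $(u_-,u_+)\in\overline{\mathcal G}$, then $f^l(u_-)=f^r(u_+)=f^l(u^l)=f^r(u^r)$.
   Context: $q^{l,r}(z,k)=\operatorname{sign}(z-k)(f^{l,r}(z)-f^{l,r}(k))$. A germ is a set $\mathcal G\subset U\times U$ of pairs with $f^l(u^l)=f^r(u^r)$; L1D if $q^l(u^l,\hat u^l)\ge q^r(u^r,\hat u^r)$ for all pairs in $\mathcal G$. $u_-$ connects to $u^l$ from the left if there is a Kruzhkov entropy solution $w$ of $w_t+f^l(w)_x=0$ on $(0,\infty)\times\mathbb R$ with data $u_-$ ($x<0$), $u^l$ ($x>0$) and $w=u^l$ a.e. on $\{x>0\}$ (only waves of nonpositive speed); $u^r$ connects to $u_+$ from the right if there is a Kruzhkov entropy solution $w$ of $w_t+f^r(w)_x=0$ with data $u^r$ ($x<0$), $u_+$ ($x>0$) and $w=u^r$ a.e. on $\{x<0\}$. Left contact shock: $(a,b)$ such that $a\mathbf 1_{x<0}+b\mathbf 1_{x>0}$ is a Kruzhkov entropy solution of $u_t+f^l(u)_x=0$; right contact shock: same with $f^r$. A germ is closed if it is a closed subset of $U\times U$ and contains $(a,d)$ whenever it contains $(b,c)$ with $(a,b)$ a left and $(c,d)$ a right contact shock; $\overline{\mathcal G}$ is the smallest closed germ containing $\mathcal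 G$. *)

theory Defs
  imports "HOL-Analysis.Analysis"
begin

definition kflux :: "(real \<Rightarrow> real) \<Rightarrow> real \<Rightarrow> real \<Rightarrow> real" where
  "kflux f z k = sgn (z - k) * (f z - f k)"

definition test_fun ::
  "(real \<times> real \<Rightarrow> real) \<Rightarrow> (real \<times> real \<Rightarrow> real) \<Rightarrow> (real \<times> real \<Rightarrow> real) \<Rightarrow> bool" where
  "test_fun phi phit phix \<longleftrightarrow>
     (\<forall>z. phi z \<ge> 0) \<and>
     (\<exists>R. \<forall>z. norm z > R \<longrightarrow> phi z = 0) \<and>
     continuous_on UNIV phit \<and> continuous_on UNIV phix \<and>
     (\<forall>z. (phi has_derivative (\<lambda>h. phit z * fst h + phix z * snd h)) (at z))"

text \<open>Kruzhkov entropy solution of  w_t + f(w)_x = 0  on (0,\<infinity>) \<times> R with initial data u0,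
  U-valued and bounded; entropy inequalities for all k in U with initial data built in.\<close>
definition kruzhkov_sol ::
  "(real \<Rightarrow> real) \<Rightarrow> real set \<Rightarrow> (real \<Rightarrow> real \<Rightarrow> real) \<Rightarrow> (real \<Rightarrow> real) \<Rightarrow> bool" where
  "kruzhkov_sol f U w u0 \<longleftrightarrow>
     (\<lambda>z. w (fst z) (snd z)) \<in> borel_measurable lborel \<and>
     (\<forall>t x. w t x \<in> U) \<and> (\<exists>M. \<forall>t x. \<bar>w t x\<bar> \<le> M) \<and>
     (\<forall>k\<in>U. \<forall>phi phit phix. test_fun phi phit phix \<longrightarrow>
        (\<integral>z. indicator {z. fst z > 0} z *
             (\<bar>w (fst z) (snd z) - k\<bar> * phit z + kflux f (w (fst z) (snd z)) k * phix z) \<partial>lborel)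
        + (\<integral>x. \<bar>u0 x - k\<bar> * phi (0, x) \<partial>lborel) \<ge> 0)"

definition step :: "real \<Rightarrow> real \<Rightarrow> real \<Rightarrow> real" where
  "step a b x = (if x < 0 then a else b)"

definition connects_left :: "(real \<Rightarrow> real) \<Rightarrow> real set \<Rightarrow> real \<Rightarrow> real \<Rightarrow> bool" where
  "connects_left fl U um ul \<longleftrightarrow>
     (\<exists>w. kruzhkov_sol fl U w (step um ul) \<and>
          (AE z in lborel. fst z > 0 \<and> snd z > 0 \<longrightarrow> w (fst z) (snd z) = ul))"

definition connects_right :: "(real \<Rightarrow> real) \<Rightarrow> real set \<Rightarrow> real \<Rightarrow> real \<Rightarrow> bool" where
  "connects_right fr U ur up \<longleftrightarrow>
     (\<exists>w. kruzhkov_sol fr U w (step ur up) \<and>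
          (AE z in lborel. fst z > 0 \<and> snd z < 0 \<longrightarrow> w (fst z) (snd z) = ur))"

definition contact_shock :: "(real \<Rightarrow> real) \<Rightarrow> real set \<Rightarrow> real \<Rightarrow> real \<Rightarrow> bool" where
  "contact_shock f U a b \<longleftrightarrow> a \<in> U \<and> b \<in> U \<and>
     kruzhkov_sol f U (\<lambda>t x. step a b x) (step a b)"

definition germ :: "(real \<Rightarrow> real) \<Rightarrow> (real \<Rightarrow> real) \<Rightarrow> real set \<Rightarrow> (real \<times> real) set \<Rightarrow> bool" where
  "germ fl fr U G \<longleftrightarrow> G \<subseteq> U \<times> U \<and> (\<forall>(a,b)\<in>G. fl a = fr b)"

definition L1D :: "(real \<Rightarrow> real) \<Rightarrow> (real \<Rightarrow> real) \<Rightarrow> real set \<Rightarrow> (real \<times> real) set \<Rightarrow> bool" where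
  "L1D fl fr U G \<longleftrightarrow> germ fl fr U G \<and>
     (\<forall>(ul,ur)\<in>G. \<forall>(vl,vr)\<in>G. kflux fl ul vl \<ge> kflux fr ur vr)"

definition closed_germ :: "(real \<Rightarrow> real) \<Rightarrow> (real \<Rightarrow> real) \<Rightarrow> real set \<Rightarrow> (real \<times> real) set \<Rightarrow> bool" where
  "closed_germ fl fr U G \<longleftrightarrow> germ fl fr U G \<and> closedin (top_of_set (U \<times> U)) G \<and>
     (\<forall>a b c d. (b,c) \<in> G \<and> contact_shock fl U a b \<and> contact_shock fr U c d \<longrightarrow> (a,d) \<in> G)"

definition germ_closure :: "(real \<Rightarrow> real) \<Rightarrow> (real \<Rightarrow> real) \<Rightarrow> real set \<Rightarrow> (real \<times> real) set \<Rightarrow> (real \<times> real) set" where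
  "germ_closure fl fr U G = \<Inter>{H. closed_germ fl fr U H \<and> G \<subseteq> H}"

end

theory Submission
  imports Defs
begin


definition pp :: "real \<Rightarrow> real" where "pp u = (max 0 u)^2"

lemma pp_deriv: "(pp has_real_derivative 2 * max 0 u) (at u)"
proof -
  have "((\<lambda>u. (u^2 + u * \<bar>u\<bar>)/2) has_real_derivative 2 * max 0 u) (at u)"
  proof (cases "u = 0")
    case True
    have "((\<lambda>h. ((h^2 + h*\<bar>h\<bar>)/2 - (0^2 + 0*\<bar>0::real\<bar>)/2) / h) \<longlongrightarrow> 0) (at 0)"
    proof -
      have "((\<lambda>h::real. (h + \<bar>h\<bar>)/2) \<longlongrightarrow> (0 + \<bar>0\<bar>)/2) (at 0)"
        by (intro tendsto_intros) auto
      then have "((\<lambda>h::real. (h + \<bar>h\<bar>)/2) \<longlongrightarrow> 0) (at 0)" by simp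
      moreover have "\<forall>\<^sub>F h in at (0::real). (h + \<bar>h\<bar>)/2 = ((h^2 + h*\<bar>h\<bar>)/2 - (0^2 + 0*\<bar>0::real\<bar>)/2) / h"
        by (auto simp: eventually_at_filter power2_eq_square field_simps)
      ultimately show ?thesis by (rule Lim_transform_eventually)
    qed
    then show ?thesis using True by (simp add: DERIV_def)
  next
    case False
    show ?thesis
    proof (cases "u > 0")
      case True
      have "((\<lambda>u. (u^2 + u * u)/2) has_real_derivative 2 * max 0 u) (at u)"
        using True by (auto intro!: derivative_eq_intros)
      then show ?thesis
        apply (rule has_field_derivative_transform_within_open[where S="{0<..}"])
        using True by auto
    next
      case F: False
      with False have "u < 0" by simp
      have "((\<lambda>u. (u^2 + u * (-u))/2) has_real_derivative 2 * max 0 u) (at u)"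
        using \<open>u<0\<close> by (auto intro!: derivative_eq_intros)
      then show ?thesis
        apply (rule has_field_derivative_transform_within_open[where S="{..<0}"])
        using \<open>u<0\<close> by auto
    qed
  qed
  moreover have "pp = (\<lambda>u. (u^2 + u * \<bar>u\<bar>)/2)"
    by (auto simp: pp_def fun_eq_iff max_def power2_eq_square abs_if)
  ultimately show ?thesis by simp
qed

definition rr :: "real \<Rightarrow> real" where "rr y = 2*(pp y - 2*pp(y - 1/2) + pp(y - 1))"
definition rr' :: "real \<Rightarrow> real" where "rr' y = 4*(max 0 y - 2*max 0 (y - 1/2) + max 0 (y - 1))"

lemma rr_deriv: "(rr has_real_derivative rr' y) (at y)"
  unfolding rr_def[abs_def] rr'_def
  by (auto intro!: derivative_eq_intros pp_deriv[THEN DERIV_chain2] simp: algebra_simps)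

lemma rr'_cont: "continuous_on UNIV rr'"
  unfolding rr'_def by (intro continuous_intros)

lemma rr_c1: "y \<le> 0 \<Longrightarrow> rr y = 0 \<and> rr' y = 0"
  by (simp add: rr_def rr'_def pp_def)
lemma rr_c2: "0 \<le> y \<Longrightarrow> y \<le> 1/2 \<Longrightarrow> rr y = 2*y^2 \<and> rr' y = 4*y"
  by (simp add: rr_def rr'_def pp_def max_def)
lemma rr_c3: "1/2 \<le> y \<Longrightarrow> y \<le> 1 \<Longrightarrow> rr y = 1 - 2*(1-y)^2 \<and> rr' y = 4*(1-y)"
  by (simp add: rr_def rr'_def pp_def max_def power2_eq_square algebra_simps)
lemma rr_c4: "1 \<le> y \<Longrightarrow> rr y = 1 \<and> rr' y = 0"
  by (simp add: rr_def rr'_def pp_def max_def power2_eq_square algebra_simps)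

lemma rr_bounds: "0 \<le> rr y" "rr y \<le> 1" "0 \<le> rr' y" "rr' y \<le> 2"
proof -
  have "(0 \<le> rr y \<and> rr y \<le> 1) \<and> (0 \<le> rr' y \<and> rr' y \<le> 2)"
  proof (cases "y \<le> 0")
    case True then show ?thesis using rr_c1 by simp
  next
    case F1: False
    show ?thesis
    proof (cases "y \<le> 1/2")
      case True
      with F1 have "rr y = 2*y^2 \<and> rr' y = 4*y" by (intro rr_c2) auto
      moreover have "y*y \<le> (1/2)*(1/2)" using True F1 by (intro mult_mono) auto
      then have "y^2 \<le> 1/4" by (simp add: power2_eq_square)
      ultimately show ?thesis using True F1 by simp
    next
      case F2: False
      show ?thesis
      proof (cases "y \<le> 1")
        case True
        with F2 have "rr y = 1 - 2*(1-y)^2 \<and> rr' y = 4*(1-y)" by (intro rr_c3) auto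
        moreover have "(1-y)*(1-y) \<le> (1/2)*(1/2)" using True F2 by (intro mult_mono) auto
        then have "(1-y)^2 \<le> 1/4" by (simp add: power2_eq_square)
        ultimately show ?thesis using True F2 by simp
      next
        case False
        then show ?thesis using rr_c4 by simp
      qed
    qed
  qed
  then show "0 \<le> rr y" "rr y \<le> 1" "0 \<le> rr' y" "rr' y \<le> 2" by auto
qed

lemma rr_cont: "continuous_on UNIV rr"
  unfolding rr_def[abs_def] pp_def by (intro continuous_intros)

lemma rr'_zero: "y \<le> 0 \<or> 1 \<le> y \<Longrightarrow> rr' y = 0"
  using rr_c1 rr_c4 by auto

definition bb :: "real \<Rightarrow> real" where "bb s = pp (1 - s^2)"
definition chi :: "real \<Rightarrow> real" where "chi t = bb ((t+1)/3)"
definition chi' :: "real \<Rightarrow> real" where "chi' t = 2 * max 0 (1 - ((t+1)/3)^2) * (-2*((t+1)/3)) / 3"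

lemma chi_deriv: "(chi has_real_derivative chi' t) (at t)"
proof -
  have d1: "((\<lambda>t. 1 - ((t+1)/3)^2) has_real_derivative (-(2*((t+1)/3)*(1/3)))) (at t)"
    by (auto intro!: derivative_eq_intros)
  have "((\<lambda>t. pp (1 - ((t+1)/3)^2)) has_real_derivative (2 * max 0 (1 - ((t+1)/3)^2)) * (-(2*((t+1)/3)*(1/3)))) (at t)"
    by (rule DERIV_chain2[OF pp_deriv d1])
  moreover have "(2 * max 0 (1 - ((t+1)/3)^2)) * (-(2*((t+1)/3)*(1/3))) = chi' t" by (simp add: chi'_def field_simps)
  ultimately show ?thesis unfolding chi_def[abs_def] bb_def by simp
qed

lemma chi'_cont: "continuous_on UNIV chi'"
  unfolding chi'_def by (intro continuous_intros) auto

lemma chi_nonneg: "0 \<le> chi t"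
  by (simp add: chi_def bb_def pp_def)

lemma chi_supp: "\<bar>t\<bar> > 4 \<Longrightarrow> chi t = 0"
proof -
  assume "\<bar>t\<bar> > 4"
  then have "1 < \<bar>(t+1)/3\<bar>" by auto
  then have "1*1 < \<bar>(t+1)/3\<bar> * \<bar>(t+1)/3\<bar>" by (intro mult_strict_mono) auto
  then have "1 < ((t+1)/3)^2" by (simp add: power2_eq_square)
  then show "chi t = 0" by (simp add: chi_def bb_def pp_def)
qed

lemma chi_props:
  assumes "0 \<le> t"
  shows "chi' t \<le> 0" "chi t \<le> 2 * (- chi' t)" "chi t \<le> 1" "t \<le> 1 \<Longrightarrow> 25/81 \<le> chi t"
    "t \<ge> 2 \<Longrightarrow> chi t = 0"
proof -
  define s where "s = (t+1)/3"
  have s: "1/3 \<le> s" using assms by (simp add: s_def)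
  have ct: "chi t = (max 0 (1 - s^2))^2" "chi' t = 2 * max 0 (1 - s^2) * (-2* s) / 3"
    by (simp_all add: chi_def bb_def pp_def chi'_def s_def)
  show "chi' t \<le> 0" using s unfolding ct
    by (simp add: mult_nonneg_nonneg divide_nonpos_pos mult_nonneg_nonpos)
  show "chi t \<le> 2 * (- chi' t)"
  proof (cases "s^2 \<le> 1")
    case True
    have "s* s \<ge> (1/3)*(1/3)" using s by (intro mult_mono) auto
    then have "s^2 \<ge> 1/9" by (simp add: power2_eq_square)
    then have "1 - s^2 \<le> 8* s/3" using s by simp
    then have "(1 - s^2) * (1-s^2) \<le> (8* s/3) * (1 - s^2)" using True by (intro mult_right_mono) auto
    moreover have m: "max 0 (1-s^2) = 1 - s^2" using True by simp
    moreover have "2 * (-(2*(1-s^2)*(-2* s)/3)) = (8* s/3)*(1-s^2)" by (simp add: field_simps power2_eq_square)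
    ultimately show ?thesis unfolding ct m by (simp only: power2_eq_square[of "1 - s^2"])
  next
    case False then show ?thesis unfolding ct by simp
  qed
  show "chi t \<le> 1"
  proof -
    have "max 0 (1 - s^2) \<le> 1" by simp
    then have "(max 0 (1 - s^2))^2 \<le> 1^2" by (intro power_mono) auto
    then show ?thesis unfolding ct by simp
  qed
  show "t \<le> 1 \<Longrightarrow> 25/81 \<le> chi t"
  proof -
    assume "t \<le> 1"
    then have "s \<le> 2/3" by (simp add: s_def)
    then have "s^2 \<le> (2/3)^2" using s by (intro power_mono) auto
    then have "5/9 \<le> max 0 (1 - s^2)" by (simp add: power2_eq_square)
    then have "(5/9)^2 \<le> (max 0 (1 - s^2))^2" by (rule power_mono) auto
    then show ?thesis unfolding ct by (simp add: power2_eq_square)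
  qed
  show "t \<ge> 2 \<Longrightarrow> chi t = 0"
  proof -
    assume "t \<ge> 2"
    then have "1 \<le> s" by (simp add: s_def)
    then have "1 \<le> s^2" by (simp add: one_le_power)
    then show ?thesis unfolding ct by simp
  qed
qed

lemma chi0: "chi 0 = 64/81"
  by (simp add: chi_def bb_def pp_def power2_eq_square)

definition psi :: "real \<Rightarrow> real \<Rightarrow> real \<Rightarrow> real" where
  "psi R e x = rr((x+2*R)/R) * rr((e-x)/e)"
definition psi' :: "real \<Rightarrow> real \<Rightarrow> real \<Rightarrow> real" where
  "psi' R e x = rr'((x+2*R)/R)/R * rr((e-x)/e) - rr((x+2*R)/R) * (rr'((e-x)/e)/e)"

lemma psi_deriv: "R \<noteq> 0 \<Longrightarrow> e \<noteq> 0 \<Longrightarrow> (psi R e has_real_derivative psi' R e x) (at x)"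
proof -
  assume R: "R \<noteq> 0" and e: "e \<noteq> 0"
  have d1: "((\<lambda>x. (x+2*R)/R) has_real_derivative 1/R) (at x)"
    using R by (auto intro!: derivative_eq_intros)
  have d2: "((\<lambda>x. (e-x)/e) has_real_derivative -1/e) (at x)"
    using e by (auto intro!: derivative_eq_intros)
  have a: "((\<lambda>x. rr((x+2*R)/R)) has_real_derivative rr'((x+2*R)/R) * (1/R)) (at x)"
    by (rule DERIV_chain2[OF rr_deriv d1])
  have b: "((\<lambda>x. rr((e-x)/e)) has_real_derivative rr'((e-x)/e) * (-1/e)) (at x)"
    by (rule DERIV_chain2[OF rr_deriv d2])
  show ?thesis unfolding psi_def[abs_def]
    by (rule DERIV_cong[OF DERIV_mult[OF a b]]) (simp add: psi'_def algebra_simps)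
qed

lemma psi'_cont: "0 < R \<Longrightarrow> 0 < e \<Longrightarrow> continuous_on UNIV (psi' R e)"
  unfolding psi'_def[abs_def]
  by (intro continuous_intros continuous_on_compose2[OF rr'_cont] continuous_on_compose2[OF rr_cont]) auto


lemma psi_left:
  assumes "0 < R" "0 < e" "x \<le> 0"
  shows "psi R e x = rr((x+2*R)/R)" "psi' R e x = rr'((x+2*R)/R)/R"
proof -
  have "1 \<le> (e-x)/e" using assms by (simp add: field_simps)
  then show "psi R e x = rr((x+2*R)/R)" "psi' R e x = rr'((x+2*R)/R)/R"
    using rr_c4 by (auto simp: psi_def psi'_def)
qed

lemma psi_right:
  assumes "0 < R" "0 < e" "0 \<le> x"
  shows "psi R e x = rr((e-x)/e)" "psi' R e x = - rr'((e-x)/e)/e"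
proof -
  have "1 \<le> (x+2*R)/R" using assms by (simp add: field_simps)
  then show "psi R e x = rr((e-x)/e)" "psi' R e x = - rr'((e-x)/e)/e"
    using rr_c4 by (auto simp: psi_def psi'_def)
qed

lemma psi_bounds: "0 \<le> psi R e x" "psi R e x \<le> 1"
  unfolding psi_def using rr_bounds
  by (auto intro: mult_nonneg_nonneg mult_le_one)

lemma psi_zero:
  assumes "0 < R" "0 < e" "x \<le> -2*R \<or> e \<le> x"
  shows "psi R e x = 0"
proof (cases "x \<le> 0")
  case True
  then have "x \<le> -2*R" using assms by auto
  then have "(x+2*R)/R \<le> 0" using assms by (simp add: divide_nonpos_pos)
  then show ?thesis using psi_left[OF assms(1,2) True] rr_c1 by simp
next
  case False
  then have "e \<le> x" using assms by auto
  then have "(e-x)/e \<le> 0" using assms by (simp add: divide_nonpos_pos)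
  then show ?thesis using psi_right[OF assms(1,2)] False rr_c1 by simp
qed

lemma psi_one:
  assumes "0 < R" "0 < e" "-R \<le> x" "x \<le> 0"
  shows "psi R e x = 1"
proof -
  have "1 \<le> (x+2*R)/R" using assms by (simp add: field_simps)
  then show ?thesis using psi_left[OF assms(1,2,4)] rr_c4 by simp
qed

lemma psi'_left_bound:
  assumes "0 < R" "0 < e" "x \<le> 0"
  shows "0 \<le> psi' R e x" "psi' R e x \<le> (2/R) * indicator {-2*R..-R} x"
proof -
  show "0 \<le> psi' R e x" using psi_left[OF assms] rr_bounds assms by simp
  show "psi' R e x \<le> (2/R) * indicator {-2*R..-R} x"
  proof (cases "x \<in> {-2*R..-R}")
    case True
    then show ?thesis using psi_left[OF assms] rr_bounds(4) assms by (simp add: divide_right_mono)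
  next
    case False
    then have "(x+2*R)/R \<le> 0 \<or> 1 \<le> (x+2*R)/R" using assms by (auto simp: field_simps)
    then show ?thesis using psi_left[OF assms] rr'_zero False by simp
  qed
qed

lemma psi'_right_bound:
  assumes "0 < R" "0 < e" "0 \<le> x"
  shows "psi' R e x \<le> 0" "- psi' R e x \<le> (2/e) * indicator {0..e} x"
proof -
  show "psi' R e x \<le> 0" using psi_right[OF assms] rr_bounds assms by simp
  show "- psi' R e x \<le> (2/e) * indicator {0..e} x"
  proof (cases "x \<in> {0..e}")
    case True
    then show ?thesis using psi_right[OF assms] rr_bounds(4) assms by (simp add: divide_right_mono)
  next
    case False
    then have "(e-x)/e \<le> 0" using assms by (auto simp: field_simps)
    then show ?thesis using psi_right[OF assms] rr'_zero False by simp
  qed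
qed

lemma psi'_0: "0 < R \<Longrightarrow> 0 < e \<Longrightarrow> psi' R e 0 = 0"
  using psi_right[of R e 0] rr_c4 by simp

lemma psi'_abs_bound:
  assumes "0 < R" "0 < e"
  shows "\<bar>psi' R e x\<bar> \<le> (2/R) * indicator {-2*R..-R} x + (2/e) * indicator {0..e} x"
proof (cases "x \<le> 0")
  case True
  have "0 \<le> (2/e) * indicator {0..e} x" using assms by simp
  then show ?thesis using psi'_left_bound[OF assms True] by simp
next
  case False
  have "0 \<le> (2/R) * indicator {-2*R..-R} x" using assms by simp
  then show ?thesis using psi'_right_bound[OF assms, of x] False by simp
qed

lemma psi'_int_right:
  assumes "0 < R" "0 < e"
  shows "(\<integral>x. indicator {0<..} x * psi' R e x \<partial>lborel) = -1"
proof -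
  have "(\<integral>x. indicator {0..e} x *\<^sub>R psi' R e x \<partial>lborel) = psi R e e - psi R e 0"
  proof (rule integral_FTC_atLeastAtMost)
    show "0 \<le> e" using assms by simp
    show "(psi R e has_vector_derivative psi' R e x) (at x within {0..e})" for x
      using psi_deriv[of R e x] assms
      by (simp add: has_real_derivative_iff_has_vector_derivative[symmetric] has_field_derivative_at_within)
    show "continuous_on {0..e} (psi' R e)"
      using psi'_cont[OF assms] continuous_on_subset by blast
  qed
  also have "\<dots> = -1"
    using psi_zero[OF assms, of e] psi_one[OF assms, of 0] assms by simp
  finally have *: "(\<integral>x. indicator {0..e} x *\<^sub>R psi' R e x \<partial>lborel) = -1" .
  have "(\<lambda>x. indicator {0<..} x * psi' R e x) = (\<lambda>x. indicator {0..e} x *\<^sub>R psi' R e x)"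
    apply (rule ext)
  proof -
    fix x :: real
    show "indicator {0<..} x * psi' R e x = indicator {0..e} x *\<^sub>R psi' R e x"
    proof (cases "x = 0 \<or> x > e")
      case True
      then have "psi' R e x = 0"
        using psi'_0[OF assms] psi'_right_bound[OF assms, of x] assms by (auto simp: indicator_def)
      then show ?thesis by simp
    next
      case False then show ?thesis by (auto simp: indicator_def)
    qed
  qed
  then show ?thesis using * by metis
qed

lemma psi'_int_left:
  assumes "0 < R" "0 < e"
  shows "(\<integral>x. indicator {..<0} x * psi' R e x \<partial>lborel) = 1"
proof -
  have "(\<integral>x. indicator {-2*R..0} x *\<^sub>R psi' R e x \<partial>lborel) = psi R e 0 - psi R e (-2*R)"
  proof (rule integral_FTC_atLeastAtMost)
    show "-2*R \<le> 0" using assms by simp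
    show "(psi R e has_vector_derivative psi' R e x) (at x within {-2*R..0})" for x
      using psi_deriv[of R e x] assms
      by (simp add: has_real_derivative_iff_has_vector_derivative[symmetric] has_field_derivative_at_within)
    show "continuous_on {-2*R..0} (psi' R e)"
      using psi'_cont[OF assms] continuous_on_subset by blast
  qed
  also have "\<dots> = 1"
    using psi_zero[OF assms, of "-2*R"] psi_one[OF assms, of 0] assms by simp
  finally have *: "(\<integral>x. indicator {-2*R..0} x *\<^sub>R psi' R e x \<partial>lborel) = 1" .
  have "(\<lambda>x. indicator {..<0} x * psi' R e x) = (\<lambda>x. indicator {-2*R..0} x *\<^sub>R psi' R e x)"
    apply (rule ext)
  proof -
    fix x :: real
    show "indicator {..<0} x * psi' R e x = indicator {-2*R..0} x *\<^sub>R psi' R e x"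
    proof (cases "x = 0 \<or> x < -2*R")
      case True
      then have "psi' R e x = 0"
        using psi'_0[OF assms] psi'_left_bound[OF assms, of x] assms by (auto simp: indicator_def)
      then show ?thesis by simp
    next
      case False then show ?thesis by (auto simp: indicator_def)
    qed
  qed
  then show ?thesis using * by metis
qed




lemma int_prod:
  fixes g h :: "real \<Rightarrow> real"
  assumes g: "integrable lborel g" and h: "integrable lborel h"
  shows "integrable lborel (\<lambda>z::real\<times>real. g (fst z) * h (snd z))"
    "(\<integral>z. g (fst z) * h (snd z) \<partial>(lborel::(real\<times>real) measure)) = (\<integral>t. g t \<partial>lborel) * (\<integral>x. h x \<partial>lborel)"
proof -
  have gm[measurable]: "g \<in> borel_measurable lborel" using g by (rule borel_measurable_integrable)
  have hm[measurable]: "h \<in> borel_measurable lborel" using h by (rule borel_measurable_integrable)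
  have I: "integrable (lborel \<Otimes>\<^sub>M lborel) (\<lambda>z::real\<times>real. g (fst z) * h (snd z))"
  proof (rule lborel_pair.Fubini_integrable)
    show "(\<lambda>z::real\<times>real. g (fst z) * h (snd z)) \<in> borel_measurable (lborel \<Otimes>\<^sub>M lborel)"
      by measurable
    have "(\<lambda>x. \<integral>y. norm (g (fst (x, y)) * h (snd (x, y))) \<partial>lborel) = (\<lambda>x. \<bar>g x\<bar> * (\<integral>y. \<bar>h y\<bar> \<partial>lborel))"
      by (simp add: abs_mult)
    moreover have "integrable lborel (\<lambda>x. \<bar>g x\<bar> * (\<integral>y. \<bar>h y\<bar> \<partial>lborel))"
      using g by (intro integrable_mult_left) auto
    ultimately show "integrable lborel (\<lambda>x. \<integral>y. norm (g (fst (x, y)) * h (snd (x, y))) \<partial>lborel)"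
      by simp
    show "AE x in lborel. integrable lborel (\<lambda>y. g (fst (x, y)) * h (snd (x, y)))"
      using h by (auto intro!: integrable_mult_right)
  qed
  then show "integrable lborel (\<lambda>z::real\<times>real. g (fst z) * h (snd z))"
    by (simp add: lborel_prod)
  have "(\<integral>x. (\<integral>y. g (fst (x,y)) * h (snd (x,y)) \<partial>lborel) \<partial>lborel) =
      integral\<^sup>L (lborel \<Otimes>\<^sub>M lborel) (\<lambda>z::real\<times>real. g (fst z) * h (snd z))"
    by (rule lborel_pair.integral_fst'[OF I])
  then show "(\<integral>z. g (fst z) * h (snd z) \<partial>(lborel::(real\<times>real) measure)) = (\<integral>t. g t \<partial>lborel) * (\<integral>x. h x \<partial>lborel)"
    by (simp add: lborel_prod)
qed

lemma integrable_Icc: "integrable lborel (\<lambda>x::real. indicator {a..b} x :: real)"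
proof (rule integrable_real_indicator)
  show "emeasure lborel {a..b} < \<infinity>"
  proof (cases "a \<le> b")
    case True then show ?thesis by (simp add: emeasure_lborel_Icc)
  next
    case False then show ?thesis by simp
  qed
qed simp

lemma integrable_bdd2:
  fixes g :: "real\<times>real \<Rightarrow> real"
  assumes "g \<in> borel_measurable lborel"
    and "\<And>z. \<bar>g z\<bar> \<le> C * (indicator {a1..b1} (fst z) * indicator {a2..b2} (snd z))"
  shows "integrable lborel g"
proof -
  have "integrable lborel (\<lambda>z::real\<times>real. indicator {a1..b1} (fst z) * indicator {a2..b2} (snd z) :: real)"
    by (rule int_prod) (rule integrable_Icc)+
  then have "integrable lborel (\<lambda>z::real\<times>real. C * (indicator {a1..b1} (fst z) * indicator {a2..b2} (snd z)))"
    by (rule integrable_mult_right)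
  then show ?thesis
  proof (rule Bochner_Integration.integrable_bound)
    show "g \<in> borel_measurable lborel" by fact
  qed (intro AE_I2, simp only: real_norm_def, rule order_trans[OF assms(2) abs_ge_self])
qed

lemma integrable_bdd1:
  fixes g :: "real \<Rightarrow> real"
  assumes "g \<in> borel_measurable lborel"
    and "\<And>z. \<bar>g z\<bar> \<le> C * indicator {a1..b1} z"
  shows "integrable lborel g"
proof -
  have "integrable lborel (\<lambda>z::real. C * indicator {a1..b1} z)"
    by (rule integrable_mult_right) (rule integrable_Icc)
  then show ?thesis
  proof (rule Bochner_Integration.integrable_bound)
    show "g \<in> borel_measurable lborel" by fact
  qed (intro AE_I2, simp only: real_norm_def, rule order_trans[OF assms(2) abs_ge_self])
qed

lemma meas_f:
  fixes f :: "real \<Rightarrow> real" and U :: "real set"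
  assumes "closed U" "continuous_on U f" "W \<in> borel_measurable M" "\<And>z. W z \<in> U"
  shows "(\<lambda>z. f (W z)) \<in> borel_measurable M"
proof -
  have "(\<lambda>x. if x \<in> U then f x else 0) \<in> borel_measurable borel"
    using assms by (intro borel_measurable_continuous_on_if) (auto intro: continuous_on_const)
  then have "(\<lambda>z. (\<lambda>x. if x \<in> U then f x else 0) (W z)) \<in> borel_measurable M"
    using assms(3) by (rule measurable_compose[rotated])
  moreover have "(\<lambda>z. (\<lambda>x. if x \<in> U then f x else 0) (W z)) = (\<lambda>z. f (W z))"
    using assms(4) by auto
  ultimately show ?thesis by simp
qed

lemma meas_kflux:
  fixes f :: "real \<Rightarrow> real" and U :: "real set"
  assumes "closed U" "continuous_on U f" "W \<in> borel_measurable M" "\<And>z. W z \<in> U"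
  shows "(\<lambda>z. kflux f (W z) k) \<in> borel_measurable M"
proof -
  have [measurable]: "(\<lambda>z. f (W z)) \<in> borel_measurable M" by (rule meas_f[OF assms])
  have [measurable]: "W \<in> borel_measurable M" by fact
  show ?thesis unfolding kflux_def by measurable
qed




lemma test_fun_prod:
  fixes c c' p p' :: "real \<Rightarrow> real"
  assumes cd: "\<And>t. (c has_real_derivative c' t) (at t)" and cc: "continuous_on UNIV c'"
    and c0: "\<And>t. 0 \<le> c t" and cs: "\<And>t. A < \<bar>t\<bar> \<Longrightarrow> c t = 0"
    and pd: "\<And>t. (p has_real_derivative p' t) (at t)" and pc: "continuous_on UNIV p'"
    and p0: "\<And>t. 0 \<le> p t" and ps: "\<And>t. B < \<bar>t\<bar> \<Longrightarrow> p t = 0"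
  shows "test_fun (\<lambda>z. c (fst z) * p (snd z)) (\<lambda>z. c' (fst z) * p (snd z)) (\<lambda>z. c (fst z) * p' (snd z))"
  unfolding test_fun_def
proof (intro conjI allI impI)
  fix z :: "real \<times> real"
  show "0 \<le> c (fst z) * p (snd z)" using c0 p0 by (simp add: mult_nonneg_nonneg)
next
  show "\<exists>R. \<forall>z::real\<times>real. R < norm z \<longrightarrow> c (fst z) * p (snd z) = 0"
  proof (intro exI allI impI)
    fix z :: "real\<times>real"
    assume "A + B < norm z"
    moreover have "norm z \<le> \<bar>fst z\<bar> + \<bar>snd z\<bar>"
      using norm_Pair_le[of "fst z" "snd z"] by simp
    ultimately have "A < \<bar>fst z\<bar> \<or> B < \<bar>snd z\<bar>" by linarith
    then show "c (fst z) * p (snd z) = 0" using cs ps by auto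
  qed
next
  have ccont: "continuous_on UNIV c" using cd
    by (metis DERIV_isCont continuous_at_imp_continuous_on)
  have pcont: "continuous_on UNIV p" using pd
    by (metis DERIV_isCont continuous_at_imp_continuous_on)
  show "continuous_on UNIV (\<lambda>z::real\<times>real. c' (fst z) * p (snd z))"
    by (intro continuous_intros continuous_on_compose2[OF cc] continuous_on_compose2[OF pcont]) auto
  show "continuous_on UNIV (\<lambda>z::real\<times>real. c (fst z) * p' (snd z))"
    by (intro continuous_intros continuous_on_compose2[OF ccont] continuous_on_compose2[OF pc]) auto
next
  fix z :: "real \<times> real"
  have d1: "((\<lambda>z. c (fst z)) has_derivative (\<lambda>h. fst h * c' (fst z))) (at z)"
    by (rule DERIV_compose_FDERIV[OF cd has_derivative_fst[OF has_derivative_ident]])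
  have d2: "((\<lambda>z. p (snd z)) has_derivative (\<lambda>h. snd h * p' (snd z))) (at z)"
    by (rule DERIV_compose_FDERIV[OF pd has_derivative_snd[OF has_derivative_ident]])
  show "((\<lambda>z. c (fst z) * p (snd z)) has_derivative
      (\<lambda>h. c' (fst z) * p (snd z) * fst h + c (fst z) * p' (snd z) * snd h)) (at z)"
    by (rule has_derivative_eq_rhs[OF has_derivative_mult[OF d1 d2]]) (auto simp: fun_eq_iff algebra_simps)
qed

lemma kr_prod:
  fixes f :: "real \<Rightarrow> real" and U :: "real set" and c c' p p' :: "real \<Rightarrow> real"
  assumes sol: "kruzhkov_sol f U w u0" and k: "k \<in> U"
    and cd: "\<And>t. (c has_real_derivative c' t) (at t)" and cc: "continuous_on UNIV c'"
    and c0: "\<And>t. 0 \<le> c t" and cs: "\<And>t. A < \<bar>t\<bar> \<Longrightarrow> c t = 0"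
    and pd: "\<And>t. (p has_real_derivative p' t) (at t)" and pc: "continuous_on UNIV p'"
    and p0: "\<And>t. 0 \<le> p t" and ps: "\<And>t. B < \<bar>t\<bar> \<Longrightarrow> p t = 0"
  shows "0 \<le> (\<integral>z. indicator {z. fst z > 0} z * (\<bar>w (fst z) (snd z) - k\<bar> * (c' (fst z) * p (snd z))
        + kflux f (w (fst z) (snd z)) k * (c (fst z) * p' (snd z))) \<partial>lborel)
      + (\<integral>x. \<bar>u0 x - k\<bar> * (c 0 * p x) \<partial>lborel)"
proof -
  have T: "test_fun (\<lambda>z. c (fst z) * p (snd z)) (\<lambda>z. c' (fst z) * p (snd z)) (\<lambda>z. c (fst z) * p' (snd z))"
    by (rule test_fun_prod[OF cd cc c0 cs pd pc p0 ps])
  have H: "\<forall>k\<in>U. \<forall>phi phit phix. test_fun phi phit phix \<longrightarrow>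
        (\<integral>z. indicator {z. fst z > 0} z *
             (\<bar>w (fst z) (snd z) - k\<bar> * phit z + kflux f (w (fst z) (snd z)) k * phix z) \<partial>lborel)
        + (\<integral>x. \<bar>u0 x - k\<bar> * phi (0, x) \<partial>lborel) \<ge> 0"
    using sol unfolding kruzhkov_sol_def by blast
  show ?thesis using H[rule_format, OF k T] by simp
qed




lemma abs4: fixes i x y z :: real
  assumes "\<bar>i\<bar> \<le> 1" "\<bar>x\<bar> \<le> X" "\<bar>y\<bar> \<le> Y" "\<bar>z\<bar> \<le> Z"
  shows "\<bar>i * (x * (y * z))\<bar> \<le> X * (Y * Z)"
proof -
  have "\<bar>y * z\<bar> \<le> Y * Z" unfolding abs_mult using assms by (intro mult_mono) auto
  then have "\<bar>x * (y * z)\<bar> \<le> X * (Y * Z)" unfolding abs_mult[of x] using assms by (intro mult_mono) auto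
  then have "\<bar>i\<bar> * \<bar>x * (y * z)\<bar> \<le> 1 * (X * (Y * Z))" using assms by (intro mult_mono) auto
  then show ?thesis by (simp add: abs_mult)
qed

lemma f_bounded:
  fixes f :: "real \<Rightarrow> real"
  assumes "closed U" "continuous_on U f"
  shows "\<exists>B. \<forall>v\<in>U. \<bar>v\<bar> \<le> M \<longrightarrow> \<bar>f v\<bar> \<le> B"
proof -
  have "compact (U \<inter> {-M..M})" using assms by (intro closed_Int_compact) auto
  then have "compact (f ` (U \<inter> {-M..M}))"
    using compact_continuous_image[OF continuous_on_subset[OF assms(2), of "U \<inter> {-M..M}"]] by auto
  then obtain B where "\<forall>y\<in>f ` (U \<inter> {-M..M}). norm y \<le> B"
    using compact_imp_bounded bounded_iff by metis
  then show ?thesis by (intro exI[of _ B]) (auto simp: abs_le_iff)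
qed

lemma kflux_bound: "\<bar>f v\<bar> \<le> B \<Longrightarrow> \<bar>f k\<bar> \<le> B \<Longrightarrow> \<bar>kflux f v k\<bar> \<le> 2*B"
proof -
  assume "\<bar>f v\<bar> \<le> B" "\<bar>f k\<bar> \<le> B"
  moreover have "\<bar>f v - f k\<bar> \<le> \<bar>f v\<bar> + \<bar>f k\<bar>" by (rule abs_triangle_ineq4)
  moreover have "\<bar>sgn (v - k)\<bar> \<le> (1::real)" by (simp add: sgn_real_def)
  ultimately have "\<bar>sgn (v - k)\<bar> * \<bar>f v - f k\<bar> \<le> 1 * (2*B)"
    by (intro mult_mono) auto
  then show ?thesis unfolding kflux_def by (simp add: abs_mult)
qed

lemma kflux_sym: "kflux f a b = kflux f b a"
  unfolding kflux_def by (simp add: sgn_real_def)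

lemma kr_split:
  fixes f :: "real \<Rightarrow> real" and U :: "real set" and c c' p p' :: "real \<Rightarrow> real"
  assumes sol: "kruzhkov_sol f U w u0" and k: "k \<in> U" and U: "closed U" and fc: "continuous_on U f"
    and cd: "\<And>t. (c has_real_derivative c' t) (at t)" and cc: "continuous_on UNIV c'"
    and c0: "\<And>t. 0 \<le> c t" and cs: "\<And>t. A < \<bar>t\<bar> \<Longrightarrow> c t = 0"
    and pd: "\<And>t. (p has_real_derivative p' t) (at t)" and pc: "continuous_on UNIV p'"
    and p0: "\<And>t. 0 \<le> p t" and ps: "\<And>t. B < \<bar>t\<bar> \<Longrightarrow> p t = 0"
    and cb: "\<And>t. \<bar>c t\<bar> \<le> Cc * indicator {-A..A} t" and c'b: "\<And>t. \<bar>c' t\<bar> \<le> Cc * indicator {-A..A} t"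
    and pb: "\<And>t. \<bar>p t\<bar> \<le> Cp * indicator {-B..B} t" and p'b: "\<And>t. \<bar>p' t\<bar> \<le> Cp * indicator {-B..B} t"
  shows "integrable lborel (\<lambda>z. indicator {z. fst z > 0} z * (\<bar>w (fst z) (snd z) - k\<bar> * (c' (fst z) * p (snd z))))"
    "integrable lborel (\<lambda>z. indicator {z. fst z > 0} z * (kflux f (w (fst z) (snd z)) k * (c (fst z) * p' (snd z))))"
    "0 \<le> (\<integral>z. indicator {z. fst z > 0} z * (\<bar>w (fst z) (snd z) - k\<bar> * (c' (fst z) * p (snd z))) \<partial>lborel)
      + (\<integral>z. indicator {z. fst z > 0} z * (kflux f (w (fst z) (snd z)) k * (c (fst z) * p' (snd z))) \<partial>lborel)
      + (\<integral>x. \<bar>u0 x - k\<bar> * (c 0 * p x) \<partial>lborel)"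
proof -
  have wm: "(\<lambda>z. w (fst z) (snd z)) \<in> borel_measurable lborel" and wU: "\<And>t x. w t x \<in> U"
    using sol unfolding kruzhkov_sol_def by auto
  obtain M where M: "\<And>t x. \<bar>w t x\<bar> \<le> M" using sol unfolding kruzhkov_sol_def by auto
  obtain Bf where Bf: "\<And>v. v \<in> U \<Longrightarrow> \<bar>v\<bar> \<le> max M \<bar>k\<bar> \<Longrightarrow> \<bar>f v\<bar> \<le> Bf"
    using f_bounded[OF U fc, of "max M \<bar>k\<bar>"] by auto
  have qb: "\<bar>kflux f (w t x) k\<bar> \<le> 2*Bf" for t x
    using Bf[OF wU[of t x]] Bf[OF k] M[of t x] by (intro kflux_bound) auto
  have ccont: "continuous_on UNIV c" using cd
    by (metis DERIV_isCont continuous_at_imp_continuous_on)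
  have pcont: "continuous_on UNIV p" using pd
    by (metis DERIV_isCont continuous_at_imp_continuous_on)
  have [measurable]: "c \<in> borel_measurable borel" "c' \<in> borel_measurable borel"
    "p \<in> borel_measurable borel" "p' \<in> borel_measurable borel"
    using ccont cc pcont pc by (auto intro: borel_measurable_continuous_onI)
  have [measurable]: "(\<lambda>z. kflux f (w (fst z) (snd z)) k) \<in> borel_measurable borel"
    using meas_kflux[OF U fc wm, of k] wU by auto
  have [measurable]: "(\<lambda>z. w (fst z) (snd z)) \<in> borel_measurable borel" using wm by simp
  have [measurable]: "(\<lambda>z::real\<times>real. c (fst z)) \<in> borel_measurable borel"
    "(\<lambda>z::real\<times>real. c' (fst z)) \<in> borel_measurable borel"
    "(\<lambda>z::real\<times>real. p (snd z)) \<in> borel_measurable borel"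
    "(\<lambda>z::real\<times>real. p' (snd z)) \<in> borel_measurable borel"
    by (auto intro!: borel_measurable_continuous_onI continuous_on_compose2[OF ccont]
        continuous_on_compose2[OF cc] continuous_on_compose2[OF pcont] continuous_on_compose2[OF pc] continuous_intros)
  have [measurable]: "(\<lambda>z::real\<times>real. indicator {z::real\<times>real. fst z > 0} z :: real) \<in> borel_measurable borel"
  proof (rule borel_measurable_indicator)
    have "{z::real\<times>real. fst z > 0} = {0<..} \<times> UNIV" by auto
    then show "{z::real\<times>real. fst z > 0} \<in> sets borel" by (auto intro!: borel_open open_Times)
  qed
  have ind: "\<bar>indicator {z::real\<times>real. fst z > 0} z\<bar> \<le> (1::real)" for z by (simp add: indicator_def)
  have bd: "\<bar>i * (x * (y * z))\<bar> \<le> X * (Cc * Cp) * (indicator {-A..A} t * indicator {-B..B} s)"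
    if "\<bar>i\<bar> \<le> 1" "\<bar>x\<bar> \<le> X" "\<bar>y\<bar> \<le> Cc * indicator {-A..A} t" "\<bar>z\<bar> \<le> Cp * indicator {-B..B} s"
    for i x y z X t s :: real
    using abs4[OF that] by (simp add: algebra_simps)
  show I1: "integrable lborel (\<lambda>z. indicator {z. fst z > 0} z * (\<bar>w (fst z) (snd z) - k\<bar> * (c' (fst z) * p (snd z))))"
  proof (rule integrable_bdd2)
    show "(\<lambda>z. indicator {z. fst z > 0} z * (\<bar>w (fst z) (snd z) - k\<bar> * (c' (fst z) * p (snd z)))) \<in> borel_measurable lborel"
      unfolding measurable_lborel2 by measurable
    fix z :: "real\<times>real"
    have "\<bar>\<bar>w (fst z) (snd z) - k\<bar>\<bar> \<le> M + \<bar>k\<bar>" using M[of "fst z" "snd z"] by simp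
    then show "\<bar>indicator {z. fst z > 0} z * (\<bar>w (fst z) (snd z) - k\<bar> * (c' (fst z) * p (snd z)))\<bar>
      \<le> (M + \<bar>k\<bar>) * (Cc * Cp) * (indicator {-A..A} (fst z) * indicator {-B..B} (snd z))"
      by (intro bd ind c'b pb)
  qed
  show I2: "integrable lborel (\<lambda>z. indicator {z. fst z > 0} z * (kflux f (w (fst z) (snd z)) k * (c (fst z) * p' (snd z))))"
  proof (rule integrable_bdd2)
    show "(\<lambda>z. indicator {z. fst z > 0} z * (kflux f (w (fst z) (snd z)) k * (c (fst z) * p' (snd z)))) \<in> borel_measurable lborel"
      unfolding measurable_lborel2 by measurable
    fix z :: "real\<times>real"
    show "\<bar>indicator {z. fst z > 0} z * (kflux f (w (fst z) (snd z)) k * (c (fst z) * p' (snd z)))\<bar>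
      \<le> (2*Bf) * (Cc * Cp) * (indicator {-A..A} (fst z) * indicator {-B..B} (snd z))"
      by (intro bd ind cb p'b qb)
  qed
  have "0 \<le> (\<integral>z. indicator {z. fst z > 0} z * (\<bar>w (fst z) (snd z) - k\<bar> * (c' (fst z) * p (snd z))
        + kflux f (w (fst z) (snd z)) k * (c (fst z) * p' (snd z))) \<partial>lborel)
      + (\<integral>x. \<bar>u0 x - k\<bar> * (c 0 * p x) \<partial>lborel)"
    by (rule kr_prod[OF sol k cd cc c0 cs pd pc p0 ps])
  also have "(\<integral>z. indicator {z. fst z > 0} z * (\<bar>w (fst z) (snd z) - k\<bar> * (c' (fst z) * p (snd z))
        + kflux f (w (fst z) (snd z)) k * (c (fst z) * p' (snd z))) \<partial>lborel)
     = (\<integral>z. indicator {z. fst z > 0} z * (\<bar>w (fst z) (snd z) - k\<bar> * (c' (fst z) * p (snd z)))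
        + indicator {z. fst z > 0} z * (kflux f (w (fst z) (snd z)) k * (c (fst z) * p' (snd z))) \<partial>lborel)"
    by (simp add: distrib_left)
  also have "\<dots> = (\<integral>z. indicator {z. fst z > 0} z * (\<bar>w (fst z) (snd z) - k\<bar> * (c' (fst z) * p (snd z))) \<partial>lborel)
      + (\<integral>z. indicator {z. fst z > 0} z * (kflux f (w (fst z) (snd z)) k * (c (fst z) * p' (snd z))) \<partial>lborel)"
    by (rule Bochner_Integration.integral_add[OF I1 I2])
  finally show "0 \<le> (\<integral>z. indicator {z. fst z > 0} z * (\<bar>w (fst z) (snd z) - k\<bar> * (c' (fst z) * p (snd z))) \<partial>lborel)
      + (\<integral>z. indicator {z. fst z > 0} z * (kflux f (w (fst z) (snd z)) k * (c (fst z) * p' (snd z))) \<partial>lborel)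
      + (\<integral>x. \<bar>u0 x - k\<bar> * (c 0 * p x) \<partial>lborel)" .
qed




lemma chi_le1: "chi t \<le> 1"
proof -
  have "max 0 (1 - ((t+1)/3)^2) \<le> 1" by simp
  then have "(max 0 (1 - ((t+1)/3)^2))^2 \<le> 1^2" by (rule power_mono) auto
  then show ?thesis by (simp add: chi_def bb_def pp_def)
qed

lemma chi'_zero: "\<bar>t\<bar> > 4 \<or> t \<ge> 2 \<Longrightarrow> chi' t = 0"
proof -
  assume "\<bar>t\<bar> > 4 \<or> t \<ge> 2"
  then have "1 \<le> \<bar>(t+1)/3\<bar>" by auto
  then have "1*1 \<le> \<bar>(t+1)/3\<bar> * \<bar>(t+1)/3\<bar>" by (intro mult_mono) auto
  then have "1 \<le> ((t+1)/3)^2" by (simp add: power2_eq_square)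
  then show "chi' t = 0" by (simp add: chi'_def)
qed

lemma chi'_bound: "\<bar>chi' t\<bar> \<le> 2"
proof -
  obtain s where s: "s = (t+1)/3" by blast
  obtain m where m_def: "m = max 0 (1 - s^2)" by blast
  have ct0: "chi' t = 2 * m * (-2 * s) / 3" unfolding chi'_def m_def s by (rule refl)
  have ct: "chi' t = -(4/3) * (m * s)" unfolding ct0 by (simp add: field_simps)
  have m: "0 \<le> m" "m \<le> 1" unfolding m_def by auto
  have "m * \<bar>s\<bar> \<le> 1 * 1"
  proof (cases "s^2 \<le> 1")
    case True
    then have "\<bar>s\<bar> \<le> 1" using abs_le_square_iff[of s 1] by simp
    then show ?thesis using m by (intro mult_mono) auto
  next
    case False
    then have "m = 0" unfolding m_def by simp
    then show ?thesis by simp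
  qed
  then have "\<bar>m * s\<bar> \<le> 1" using m by (simp add: abs_mult)
  then show ?thesis unfolding ct abs_mult by simp
qed

lemma chi_c1:
  "\<And>t. (chi has_real_derivative chi' t) (at t)" "continuous_on UNIV chi'"
  "\<And>t. 0 \<le> chi t" "\<And>t. 4 < \<bar>t\<bar> \<Longrightarrow> chi t = 0"
  "\<And>t. \<bar>chi t\<bar> \<le> 2 * indicator {-4..4} t" "\<And>t. \<bar>chi' t\<bar> \<le> 2 * indicator {-4..4} t"
proof -
  fix t
  show "(chi has_real_derivative chi' t) (at t)" by (rule chi_deriv)
  show "0 \<le> chi t" by (rule chi_nonneg)
  show "4 < \<bar>t\<bar> \<Longrightarrow> chi t = 0" by (rule chi_supp)
  show "\<bar>chi t\<bar> \<le> 2 * indicator {-4..4} t"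
    using chi_le1[of t] chi_nonneg[of t] chi_supp[of t] by (auto simp: indicator_def)
  show "\<bar>chi' t\<bar> \<le> 2 * indicator {-4..4} t"
    using chi'_bound[of t] chi'_zero[of t] by (auto simp: indicator_def)
next
  show "continuous_on UNIV chi'" by (rule chi'_cont)
qed

lemma psi_c1:
  assumes "0 < R" "0 < e"
  shows "\<And>t. (psi R e has_real_derivative psi' R e t) (at t)" "continuous_on UNIV (psi' R e)"
  "\<And>t. 0 \<le> psi R e t" "\<And>t. 2*R+e < \<bar>t\<bar> \<Longrightarrow> psi R e t = 0"
  "\<And>t. \<bar>psi R e t\<bar> \<le> (1 + 2/R + 2/e) * indicator {-(2*R+e)..2*R+e} t"
  "\<And>t. \<bar>psi' R e t\<bar> \<le> (1 + 2/R + 2/e) * indicator {-(2*R+e)..2*R+e} t"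
proof -
  fix t
  show "(psi R e has_real_derivative psi' R e t) (at t)" using assms by (intro psi_deriv) auto
  show "0 \<le> psi R e t" by (rule psi_bounds)
  show "2*R+e < \<bar>t\<bar> \<Longrightarrow> psi R e t = 0" using assms by (intro psi_zero) auto
  have p: "0 \<le> 2/R" "0 \<le> 2/e" using assms by auto
  have p1: "1 \<le> 1 + 2/R + 2/e" using p by simp
  show "\<bar>psi R e t\<bar> \<le> (1 + 2/R + 2/e) * indicator {-(2*R+e)..2*R+e} t"
  proof (cases "t \<in> {-(2*R+e)..2*R+e}")
    case True
    have "\<bar>psi R e t\<bar> \<le> 1" using psi_bounds[of R e t] by simp
    then show ?thesis using True p1 by (simp only: indicator_simps mult_1_right)
  next
    case False
    then show ?thesis using psi_zero[OF assms, of t] assms by (auto simp: indicator_def)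
  qed
  have "\<bar>psi' R e t\<bar> \<le> 2/R + 2/e"
  proof -
    have "(2/R) * indicator {-2*R..-R} t \<le> 2/R" using p by (intro mult_left_le) (auto simp: indicator_def)
    moreover have "(2/e) * indicator {0..e} t \<le> 2/e" using p by (intro mult_left_le) (auto simp: indicator_def)
    ultimately show ?thesis using psi'_abs_bound[OF assms, of t] by linarith
  qed
  moreover have "\<bar>t\<bar> > 2*R+e \<Longrightarrow> psi' R e t = 0"
  proof -
    assume a: "\<bar>t\<bar> > 2*R+e"
    show "psi' R e t = 0"
    proof (cases "t \<le> 0")
      case True
      then have "t \<notin> {-2*R..-R}" using a assms by auto
      then show ?thesis using psi'_left_bound[OF assms True] by simp
    next
      case False
      then have "t \<notin> {0..e}" using a assms by auto
      then show ?thesis using psi'_right_bound[OF assms, of t] False by simp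
    qed
  qed
  ultimately show "\<bar>psi' R e t\<bar> \<le> (1 + 2/R + 2/e) * indicator {-(2*R+e)..2*R+e} t"
    using p by (auto simp: indicator_def)
next
  show "continuous_on UNIV (psi' R e)" using assms by (rule psi'_cont)
qed

lemma chi_int:
  shows "integrable lborel (\<lambda>t. indicator {0<..} t * chi t)"
    "25/81 \<le> (\<integral>t. indicator {0<..} t * chi t \<partial>lborel)"
proof -
  have [measurable]: "chi \<in> borel_measurable borel"
    using chi_deriv by (intro borel_measurable_continuous_onI) (metis DERIV_isCont continuous_at_imp_continuous_on)
  show I: "integrable lborel (\<lambda>t. indicator {0<..} t * chi t)"
  proof (rule integrable_bdd1)
    show "(\<lambda>t. indicator {0<..} t * chi t) \<in> borel_measurable lborel" by simp
    show "\<bar>indicator {0<..} t * chi t\<bar> \<le> 2 * indicator {-4..4} t" for t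
      using chi_c1(5)[of t] by (auto simp: indicator_def)
  qed
  have "(\<integral>t. (25/81::real) * indicator {0<..1::real} t \<partial>lborel) \<le> (\<integral>t. indicator {0<..} t * chi t \<partial>lborel)"
  proof (rule Bochner_Integration.integral_mono)
    show "integrable lborel (\<lambda>t. (25/81::real) * indicator {0<..1::real} t)"
      by (intro integrable_mult_right integrable_real_indicator) auto
    show "integrable lborel (\<lambda>t. indicator {0<..} t * chi t)" by (rule I)
    show "(25/81::real) * indicator {0<..1::real} t \<le> indicator {0<..} t * chi t" for t :: real
      using chi_props(4)[of t] chi_nonneg[of t] by (auto simp: indicator_def)
  qed
  then show "25/81 \<le> (\<integral>t. indicator {0<..} t * chi t \<partial>lborel)" by simp
qed

lemma chi'_int:
  shows "integrable lborel (\<lambda>t. indicator {0<..} t * chi' t)"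
    "(\<integral>t. indicator {0<..} t * chi' t \<partial>lborel) = - chi 0"
proof -
  have [measurable]: "chi' \<in> borel_measurable borel"
    using chi'_cont by (rule borel_measurable_continuous_onI)
  show "integrable lborel (\<lambda>t. indicator {0<..} t * chi' t)"
  proof (rule integrable_bdd1)
    show "(\<lambda>t. indicator {0<..} t * chi' t) \<in> borel_measurable lborel" by simp
    show "\<bar>indicator {0<..} t * chi' t\<bar> \<le> 2 * indicator {-4..4} t" for t
      using chi_c1(6)[of t] by (auto simp: indicator_def)
  qed
  have "(\<integral>t. indicator {0..2} t *\<^sub>R chi' t \<partial>lborel) = chi 2 - chi 0"
  proof (rule integral_FTC_atLeastAtMost)
    show "(chi has_vector_derivative chi' x) (at x within {0..2})" for x
      using chi_deriv[of x]
      by (simp add: has_real_derivative_iff_has_vector_derivative[symmetric] has_field_derivative_at_within)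
    show "continuous_on {0..2} chi'"
      using chi'_cont continuous_on_subset by blast
  qed simp
  also have "chi 2 = 0" using chi_props(5)[of 2] by simp
  finally have *: "(\<integral>t. indicator {0..2} t *\<^sub>R chi' t \<partial>lborel) = - chi 0" by simp
  have "(\<integral>t. indicator {0<..} t * chi' t \<partial>lborel) = (\<integral>t. indicator {0..2} t *\<^sub>R chi' t \<partial>lborel)"
  proof (rule integral_cong_AE)
    show "AE t in lborel. indicator {0<..} t * chi' t = indicator {0..2} t *\<^sub>R chi' t"
      using AE_lborel_singleton[of 0]
    proof eventually_elim
      fix t :: real assume "t \<noteq> 0"
      then show "indicator {0<..} t * chi' t = indicator {0..2} t *\<^sub>R chi' t"
        using chi'_zero[of t] by (auto simp: indicator_def)
    qed
  qed simp_all
  then show "(\<integral>t. indicator {0<..} t * chi' t \<partial>lborel) = - chi 0" using * by simp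
qed




lemma ind_fst: "indicator {z::real\<times>real. fst z > 0} z = (indicator {0<..} (fst z) :: real)"
  by (simp add: indicator_def)

lemma step_meas[measurable]: "step a b \<in> borel_measurable borel"
  unfolding step_def[abs_def] by measurable

lemma psi_meas[measurable]: "0 < R \<Longrightarrow> 0 < e \<Longrightarrow> psi' R e \<in> borel_measurable borel"
  by (rule borel_measurable_continuous_onI) (rule psi'_cont)

lemma psi_meas2[measurable]: "0 < R \<Longrightarrow> 0 < e \<Longrightarrow> psi R e \<in> borel_measurable borel"
  unfolding psi_def[abs_def] using rr_cont
  by (intro borel_measurable_continuous_onI continuous_intros continuous_on_compose2[OF rr_cont]) auto

lemma contact_ineq:
  fixes f :: "real \<Rightarrow> real" and U :: "real set"
  assumes cs: "contact_shock f U a b" and U: "closed U" and fc: "continuous_on U f" and k: "k \<in> U"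
  shows "kflux f b k \<le> kflux f a k"
proof -
  have sol: "kruzhkov_sol f U (\<lambda>t x. step a b x) (step a b)" using cs unfolding contact_shock_def by simp
  have o: "(0::real) < 1" by simp
  note K = kr_split[OF sol k U fc chi_c1(1-4) psi_c1(1-4)[OF o o] chi_c1(5,6) psi_c1(5,6)[OF o o]]
  define J where "J = (\<integral>x. \<bar>step a b x - k\<bar> * psi 1 1 x \<partial>lborel)"
  define T where "T = (\<integral>t. indicator {0<..} t * chi t \<partial>lborel)"
  have stepb: "\<bar>\<bar>step a b x - k\<bar>\<bar> \<le> \<bar>a - k\<bar> + \<bar>b - k\<bar>" for x by (simp add: step_def)
  have IJ: "integrable lborel (\<lambda>x. \<bar>step a b x - k\<bar> * psi 1 1 x)"
  proof (rule integrable_bdd1)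
    show "(\<lambda>x. \<bar>step a b x - k\<bar> * psi 1 1 x) \<in> borel_measurable lborel" by simp
    fix x
    show "\<bar>\<bar>step a b x - k\<bar> * psi 1 1 x\<bar> \<le> ((\<bar>a - k\<bar> + \<bar>b - k\<bar>) * (1 + 2/1 + 2/1)) * indicator {-(2*1+1)..2*1+1} x"
      using mult_mono[OF stepb[of x] psi_c1(5)[OF o o, of x]] by (simp only: abs_mult mult.assoc)
  qed
  have Ipl: "integrable lborel (\<lambda>x. indicator {..<0} x * psi' 1 1 x)"
  proof (rule integrable_bdd1)
    show "(\<lambda>x. indicator {..<0} x * psi' 1 1 x) \<in> borel_measurable lborel" by simp
    fix x :: real
    show "\<bar>indicator {..<0} x * psi' 1 1 x\<bar> \<le> (1 + 2/1 + 2/1) * indicator {-(2*1+1)..2*1+1} x"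
      using psi_c1(6)[OF o o, of x] by (auto simp: indicator_def)
  qed
  have Ipr: "integrable lborel (\<lambda>x. indicator {0<..} x * psi' 1 1 x)"
  proof (rule integrable_bdd1)
    show "(\<lambda>x. indicator {0<..} x * psi' 1 1 x) \<in> borel_measurable lborel" by simp
    fix x :: real
    show "\<bar>indicator {0<..} x * psi' 1 1 x\<bar> \<le> (1 + 2/1 + 2/1) * indicator {-(2*1+1)..2*1+1} x"
      using psi_c1(6)[OF o o, of x] by (auto simp: indicator_def)
  qed
  have X: "(\<integral>z. indicator {z. fst z > 0} z * (\<bar>step a b (snd z) - k\<bar> * (chi' (fst z) * psi 1 1 (snd z))) \<partial>lborel)
      = - chi 0 * J"
  proof -
    have "(\<lambda>z::real\<times>real. indicator {z. fst z > 0} z * (\<bar>step a b (snd z) - k\<bar> * (chi' (fst z) * psi 1 1 (snd z))))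
       = (\<lambda>z. (indicator {0<..} (fst z) * chi' (fst z)) * (\<bar>step a b (snd z) - k\<bar> * psi 1 1 (snd z)))"
      by (simp add: ind_fst fun_eq_iff)
    then show ?thesis using int_prod(2)[OF chi'_int(1) IJ] chi'_int(2) unfolding J_def by simp
  qed
  have qint: "(\<integral>x. kflux f (step a b x) k * psi' 1 1 x \<partial>lborel) = kflux f a k - kflux f b k"
  proof -
    have "(\<lambda>x. kflux f (step a b x) k * psi' 1 1 x) =
        (\<lambda>x. kflux f a k * (indicator {..<0} x * psi' 1 1 x) + kflux f b k * (indicator {0<..} x * psi' 1 1 x))"
    proof
      fix x :: real
      show "kflux f (step a b x) k * psi' 1 1 x =
        kflux f a k * (indicator {..<0} x * psi' 1 1 x) + kflux f b k * (indicator {0<..} x * psi' 1 1 x)"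
        using psi'_0[OF o o] by (cases "x < 0"; cases "x = 0") (auto simp: step_def indicator_def)
    qed
    moreover have "(\<integral>x. kflux f a k * (indicator {..<0} x * psi' 1 1 x) + kflux f b k * (indicator {0<..} x * psi' 1 1 x) \<partial>lborel)
      = kflux f a k * (\<integral>x. indicator {..<0} x * psi' 1 1 x \<partial>lborel) + kflux f b k * (\<integral>x. indicator {0<..} x * psi' 1 1 x \<partial>lborel)"
      using Ipl Ipr by simp
    ultimately show ?thesis using psi'_int_left[OF o o] psi'_int_right[OF o o] by simp
  qed
  have Iq: "integrable lborel (\<lambda>x. kflux f (step a b x) k * psi' 1 1 x)"
  proof -
    have "(\<lambda>x. kflux f (step a b x) k * psi' 1 1 x) =
        (\<lambda>x. kflux f a k * (indicator {..<0} x * psi' 1 1 x) + kflux f b k * (indicator {0<..} x * psi' 1 1 x))"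
    proof
      fix x :: real
      show "kflux f (step a b x) k * psi' 1 1 x =
        kflux f a k * (indicator {..<0} x * psi' 1 1 x) + kflux f b k * (indicator {0<..} x * psi' 1 1 x)"
        using psi'_0[OF o o] by (cases "x < 0"; cases "x = 0") (auto simp: step_def indicator_def)
    qed
    then show ?thesis using Ipl Ipr by simp
  qed
  have Y: "(\<integral>z. indicator {z. fst z > 0} z * (kflux f (step a b (snd z)) k * (chi (fst z) * psi' 1 1 (snd z))) \<partial>lborel)
      = T * (kflux f a k - kflux f b k)"
  proof -
    have "(\<lambda>z::real\<times>real. indicator {z. fst z > 0} z * (kflux f (step a b (snd z)) k * (chi (fst z) * psi' 1 1 (snd z))))
       = (\<lambda>z. (indicator {0<..} (fst z) * chi (fst z)) * (kflux f (step a b (snd z)) k * psi' 1 1 (snd z)))"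
      by (simp add: ind_fst fun_eq_iff)
    then show ?thesis using int_prod(2)[OF chi_int(1) Iq] qint unfolding T_def by simp
  qed
  have I0: "(\<integral>x. \<bar>step a b x - k\<bar> * (chi 0 * psi 1 1 x) \<partial>lborel) = chi 0 * J"
  proof -
    have "(\<lambda>x. \<bar>step a b x - k\<bar> * (chi 0 * psi 1 1 x)) = (\<lambda>x. chi 0 * (\<bar>step a b x - k\<bar> * psi 1 1 x))"
      by (simp add: fun_eq_iff algebra_simps)
    then show ?thesis unfolding J_def by simp
  qed
  have "0 \<le> - chi 0 * J + T * (kflux f a k - kflux f b k) + chi 0 * J"
    using K(3) unfolding X Y I0 .
  then have "0 \<le> T * (kflux f a k - kflux f b k)" by simp
  moreover have "0 < T" using chi_int(2) unfolding T_def by simp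
  ultimately have "0 \<le> kflux f a k - kflux f b k" by (simp add: zero_le_mult_iff)
  then show ?thesis by simp
qed




definition ps :: "real \<Rightarrow> real \<Rightarrow> real \<Rightarrow> real \<Rightarrow> real" where
  "ps s R e x = psi R e (s * x)"
definition ps' :: "real \<Rightarrow> real \<Rightarrow> real \<Rightarrow> real \<Rightarrow> real" where
  "ps' s R e x = s * psi' R e (s * x)"

lemma sig_abs: "(s::real) = 1 \<or> s = -1 \<Longrightarrow> \<bar>s * x\<bar> = \<bar>x\<bar>"
  by (elim disjE) simp_all

lemma ps_c1:
  assumes "0 < R" "0 < e" and s: "s = 1 \<or> s = -1"
  shows "\<And>t. (ps s R e has_real_derivative ps' s R e t) (at t)" "continuous_on UNIV (ps' s R e)"
  "\<And>t. 0 \<le> ps s R e t" "\<And>t. 2*R+e < \<bar>t\<bar> \<Longrightarrow> ps s R e t = 0"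
  "\<And>t. \<bar>ps s R e t\<bar> \<le> (1 + 2/R + 2/e) * indicator {-(2*R+e)..2*R+e} t"
  "\<And>t. \<bar>ps' s R e t\<bar> \<le> (1 + 2/R + 2/e) * indicator {-(2*R+e)..2*R+e} t"
proof -
  fix t
  have d: "((\<lambda>x. s * x) has_real_derivative s) (at t)" by (auto intro!: derivative_eq_intros)
  show "(ps s R e has_real_derivative ps' s R e t) (at t)"
    unfolding ps_def[abs_def] ps'_def
    using DERIV_chain2[OF psi_c1(1)[OF assms(1,2)] d] by (simp add: mult.commute)
  show "0 \<le> ps s R e t" unfolding ps_def by (rule psi_bounds)
  show "2*R+e < \<bar>t\<bar> \<Longrightarrow> ps s R e t = 0" unfolding ps_def
    using psi_c1(4)[OF assms(1,2), of "s*t"] sig_abs[OF s, of t] by simp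
  have ii: "indicator {-(2*R+e)..2*R+e} (s*t) = (indicator {-(2*R+e)..2*R+e} t :: real)"
    using s by (elim disjE) (auto simp: indicator_def)
  show "\<bar>ps s R e t\<bar> \<le> (1 + 2/R + 2/e) * indicator {-(2*R+e)..2*R+e} t"
    unfolding ps_def using psi_c1(5)[OF assms(1,2), of "s*t"] ii by simp
  show "\<bar>ps' s R e t\<bar> \<le> (1 + 2/R + 2/e) * indicator {-(2*R+e)..2*R+e} t"
    unfolding ps'_def using psi_c1(6)[OF assms(1,2), of "s*t"] ii s by (auto simp: abs_mult)
next
  show "continuous_on UNIV (ps' s R e)" unfolding ps'_def[abs_def]
    by (intro continuous_intros continuous_on_compose2[OF psi_c1(2)[OF assms(1,2)]]) auto
qed

lemma subst_sig:
  fixes h :: "real \<Rightarrow> real"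
  assumes s: "s = 1 \<or> s = -1"
  shows "(\<integral>x. h (s * x) \<partial>lborel) = (\<integral>x. h x \<partial>lborel)"
    "integrable lborel (\<lambda>x. h (s * x)) \<longleftrightarrow> integrable lborel h"
proof -
  have s0: "s \<noteq> 0" using s by auto
  have "\<bar>s\<bar> = 1" using s by auto
  then show "(\<integral>x. h (s * x) \<partial>lborel) = (\<integral>x. h x \<partial>lborel)"
    using lborel_integral_real_affine[OF s0, of h 0] by simp
  show "integrable lborel (\<lambda>x. h (s * x)) \<longleftrightarrow> integrable lborel h"
    using lborel_integrable_real_affine_iff[OF s0, of h 0] by simp
qed

lemma ind_Icc_int:
  assumes s: "s = 1 \<or> s = -1" and "a \<le> b"
  shows "integrable lborel (\<lambda>x. indicator {a..b} (s * x) :: real)"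
    "(\<integral>x. indicator {a..b} (s * x) \<partial>lborel) = (b - a :: real)"
proof -
  show "integrable lborel (\<lambda>x. indicator {a..b} (s * x) :: real)"
    using subst_sig(2)[OF s, of "indicator {a..b}"] integrable_Icc by simp
  show "(\<integral>x. indicator {a..b} (s * x) \<partial>lborel) = (b - a :: real)"
    using subst_sig(1)[OF s, of "indicator {a..b}"] assms(2) by simp
qed

lemma psi'_sig_int:
  assumes s: "s = 1 \<or> s = -1" and "0 < R" "0 < e"
  shows "integrable lborel (\<lambda>x. indicator {0<..} (s * x) * psi' R e (s * x))"
    "(\<integral>x. indicator {0<..} (s * x) * psi' R e (s * x) \<partial>lborel) = -1"
proof -
  have I: "integrable lborel (\<lambda>x. indicator {0<..} x * psi' R e x)"
  proof (rule integrable_bdd1)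
    show "(\<lambda>x. indicator {0<..} x * psi' R e x) \<in> borel_measurable lborel" using assms by simp
    fix x :: real
    show "\<bar>indicator {0<..} x * psi' R e x\<bar> \<le> (1 + 2/R + 2/e) * indicator {-(2*R+e)..2*R+e} x"
      using psi_c1(6)[OF assms(2,3), of x] by (auto simp: indicator_def)
  qed
  then show "integrable lborel (\<lambda>x. indicator {0<..} (s * x) * psi' R e (s * x))"
    using subst_sig(2)[OF s, of "\<lambda>x. indicator {0<..} x * psi' R e x"] by simp
  show "(\<integral>x. indicator {0<..} (s * x) * psi' R e (s * x) \<partial>lborel) = -1"
    using subst_sig(1)[OF s, of "\<lambda>x. indicator {0<..} x * psi' R e x"] psi'_int_right[OF assms(2,3)] by simp
qed




lemma chi_prod:
  assumes "integrable lborel h"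
  shows "integrable lborel (\<lambda>z::real\<times>real. (indicator {0<..} (fst z) * chi (fst z)) * h (snd z))"
    "(\<integral>z. (indicator {0<..} (fst z) * chi (fst z)) * h (snd z) \<partial>lborel) = (\<integral>t. indicator {0<..} t * chi t \<partial>lborel) * (\<integral>x. h x \<partial>lborel)"
  using int_prod[OF chi_int(1) assms] by auto

lemma init_bound:
  fixes u0 :: "real \<Rightarrow> real"
  assumes s: "s = 1 \<or> s = -1" and R: "0 < R" and e: "0 < e"
    and u0m: "u0 \<in> borel_measurable borel"
    and u0far: "\<And>x. s * x < 0 \<Longrightarrow> u0 x = far"
    and u0v: "\<And>x. u0 x = far \<or> u0 x = nr"
  shows "(\<integral>x. \<bar>u0 x - far\<bar> * (chi 0 * ps s R e x) \<partial>lborel) \<le> chi 0 * \<bar>nr - far\<bar> * e"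
proof -
  have [measurable]: "ps s R e \<in> borel_measurable borel"
    unfolding ps_def[abs_def] using psi_meas2[OF R e] by measurable
  have [measurable]: "u0 \<in> borel_measurable borel" by (rule u0m)
  have bd: "\<bar>u0 x - far\<bar> * (chi 0 * ps s R e x) \<le> (chi 0 * \<bar>nr - far\<bar>) * indicator {0..e} (s * x)" for x
  proof (cases "s * x < 0")
    case True then show ?thesis using u0far[of x] chi_nonneg[of 0] by (simp add: indicator_def)
  next
    case False
    have a: "\<bar>u0 x - far\<bar> \<le> \<bar>nr - far\<bar>" using u0v[of x] by auto
    have b: "ps s R e x \<le> indicator {0..e} (s * x)"
      using False psi_bounds[of R e "s*x"] psi_zero[OF R e, of "s*x"] unfolding ps_def
      by (auto simp: indicator_def)
    have "\<bar>u0 x - far\<bar> * ps s R e x \<le> \<bar>nr - far\<bar> * indicator {0..e} (s * x)"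
      using a b psi_bounds[of R e "s*x"] unfolding ps_def by (intro mult_mono) auto
    then have "chi 0 * (\<bar>u0 x - far\<bar> * ps s R e x) \<le> chi 0 * (\<bar>nr - far\<bar> * indicator {0..e} (s * x))"
      using chi_nonneg[of 0] by (rule mult_left_mono) 
    then show ?thesis by (simp add: algebra_simps)
  qed
  have I2: "integrable lborel (\<lambda>x. (chi 0 * \<bar>nr - far\<bar>) * indicator {0..e} (s * x) :: real)"
    using ind_Icc_int(1)[OF s, of 0 e] e by simp
  have I1: "integrable lborel (\<lambda>x. \<bar>u0 x - far\<bar> * (chi 0 * ps s R e x))"
  proof (rule Bochner_Integration.integrable_bound[OF I2])
    show "(\<lambda>x. \<bar>u0 x - far\<bar> * (chi 0 * ps s R e x)) \<in> borel_measurable lborel"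
      unfolding measurable_lborel2 by measurable
    show "AE x in lborel. norm (\<bar>u0 x - far\<bar> * (chi 0 * ps s R e x)) \<le> norm ((chi 0 * \<bar>nr - far\<bar>) * indicator {0..e} (s * x) :: real)"
    proof (intro AE_I2)
      fix x
      have "0 \<le> \<bar>u0 x - far\<bar> * (chi 0 * ps s R e x)"
        using chi_nonneg[of 0] psi_bounds[of R e "s*x"] unfolding ps_def by simp
      then show "norm (\<bar>u0 x - far\<bar> * (chi 0 * ps s R e x)) \<le> norm ((chi 0 * \<bar>nr - far\<bar>) * indicator {0..e} (s * x) :: real)"
        using bd[of x] by simp
    qed
  qed
  have "(\<integral>x. \<bar>u0 x - far\<bar> * (chi 0 * ps s R e x) \<partial>lborel) \<le> (\<integral>x. (chi 0 * \<bar>nr - far\<bar>) * indicator {0..e} (s * x) \<partial>lborel)"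
    by (rule Bochner_Integration.integral_mono[OF I1 I2 bd])
  also have "\<dots> = chi 0 * \<bar>nr - far\<bar> * e" using ind_Icc_int(2)[OF s, of 0 e] e by simp
  finally show ?thesis .
qed




lemma hq_int:
  assumes s: "s = 1 \<or> s = -1" and R: "0 < R" and e: "0 < e"
  shows "integrable lborel (\<lambda>x. c * ((2/R) * indicator {-2*R..-R} (s*x) + (2/e) * indicator {0..e} (s*x)) :: real)"
    "(\<integral>x. c * ((2/R) * indicator {-2*R..-R} (s*x) + (2/e) * indicator {0..e} (s*x)) \<partial>lborel) = c * 4"
proof -
  have i1: "integrable lborel (\<lambda>x. indicator {-2*R..-R} (s*x) :: real)"
    and i2: "integrable lborel (\<lambda>x. indicator {0..e} (s*x) :: real)"
    using ind_Icc_int(1)[OF s] R e by auto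
  show "integrable lborel (\<lambda>x. c * ((2/R) * indicator {-2*R..-R} (s*x) + (2/e) * indicator {0..e} (s*x)) :: real)"
    using i1 i2 by simp
  have "(\<integral>x. c * ((2/R) * indicator {-2*R..-R} (s*x) + (2/e) * indicator {0..e} (s*x)) \<partial>lborel)
      = c * ((2/R) * (\<integral>x. indicator {-2*R..-R} (s*x) \<partial>lborel) + (2/e) * (\<integral>x. indicator {0..e} (s*x) \<partial>lborel))"
    using i1 i2 by simp
  also have "\<dots> = c * ((2/R) * R + (2/e) * e)"
    using ind_Icc_int(2)[OF s, of "-2*R" "-R"] ind_Icc_int(2)[OF s, of 0 e] R e by simp
  also have "\<dots> = c * 4" using R e by simp
  finally show "(\<integral>x. c * ((2/R) * indicator {-2*R..-R} (s*x) + (2/e) * indicator {0..e} (s*x)) \<partial>lborel) = c * 4" .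
qed

lemma stepA:
  fixes f :: "real \<Rightarrow> real" and U :: "real set" and u0 :: "real \<Rightarrow> real"
  assumes sol: "kruzhkov_sol f U w u0" and U: "closed U" and fc: "continuous_on U f" and farU: "far \<in> U"
    and s: "s = 1 \<or> s = -1"
    and u0m: "u0 \<in> borel_measurable borel"
    and u0far: "\<And>x. s * x < 0 \<Longrightarrow> u0 x = far"
    and u0v: "\<And>x. u0 x = far \<or> u0 x = nr"
    and R: "0 < R" and e: "0 < e"
    and Bf: "\<And>t x. \<bar>kflux f (w t x) far\<bar> \<le> 2*Bf"
  shows "- (\<integral>z. indicator {z. fst z > 0} z * (\<bar>w (fst z) (snd z) - far\<bar> * (chi' (fst z) * ps s R e (snd z))) \<partial>lborel)
     \<le> 8*Bf*(\<integral>t. indicator {0<..} t * chi t \<partial>lborel) + chi 0 * \<bar>nr - far\<bar> * e"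
proof -
  note K = kr_split[where A=4 and B="2*R+e" and Cc=2 and Cp="1 + 2/R + 2/e", OF sol farU U fc chi_c1(1-4) ps_c1(1-4)[OF R e s] chi_c1(5,6) ps_c1(5,6)[OF R e s]]
  define T where "T = (\<integral>t. indicator {0<..} t * chi t \<partial>lborel)"
  define h where "h = (\<lambda>x. (2*Bf) * ((2/R) * indicator {-2*R..-R} (s*x) + (2/e) * indicator {0..e} (s*x)) :: real)"
  have Ih: "integrable lborel h" unfolding h_def by (rule hq_int(1)[OF s R e])
  have inth: "(\<integral>x. h x \<partial>lborel) = 2*Bf*4" unfolding h_def by (rule hq_int(2)[OF s R e])
  have Bf0: "0 \<le> Bf" using Bf[of 0 0] by simp
  have pt: "indicator {z. fst z > 0} z * (kflux f (w (fst z) (snd z)) far * (chi (fst z) * ps' s R e (snd z)))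
      \<le> (indicator {0<..} (fst z) * chi (fst z)) * h (snd z)" for z :: "real\<times>real"
  proof (cases "fst z > 0")
    case True
    have ab: "\<bar>ps' s R e (snd z)\<bar> \<le> (2/R) * indicator {-2*R..-R} (s * snd z) + (2/e) * indicator {0..e} (s * snd z)"
      unfolding ps'_def using psi'_abs_bound[OF R e, of "s * snd z"] s by (auto simp: abs_mult)
    have "kflux f (w (fst z) (snd z)) far * (chi (fst z) * ps' s R e (snd z))
        \<le> \<bar>kflux f (w (fst z) (snd z)) far\<bar> * (chi (fst z) * \<bar>ps' s R e (snd z)\<bar>)"
    proof -
      have "kflux f (w (fst z) (snd z)) far * (chi (fst z) * ps' s R e (snd z))
          \<le> \<bar>kflux f (w (fst z) (snd z)) far * (chi (fst z) * ps' s R e (snd z))\<bar>" by (rule abs_ge_self)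
      also have "\<dots> = \<bar>kflux f (w (fst z) (snd z)) far\<bar> * (chi (fst z) * \<bar>ps' s R e (snd z)\<bar>)"
        using chi_nonneg[of "fst z"] by (simp add: abs_mult)
      finally show ?thesis .
    qed
    also have "\<dots> \<le> (2*Bf) * (chi (fst z) * ((2/R) * indicator {-2*R..-R} (s * snd z) + (2/e) * indicator {0..e} (s * snd z)))"
      using Bf ab chi_nonneg[of "fst z"] Bf0 by (intro mult_mono mult_left_mono) auto
    finally show ?thesis using True unfolding h_def by (simp add: algebra_simps)
  next
    case False then show ?thesis by (simp add: indicator_def)
  qed
  have "(\<integral>z. indicator {z. fst z > 0} z * (kflux f (w (fst z) (snd z)) far * (chi (fst z) * ps' s R e (snd z))) \<partial>lborel)
      \<le> (\<integral>z. (indicator {0<..} (fst z) * chi (fst z)) * h (snd z) \<partial>lborel)"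
    by (rule Bochner_Integration.integral_mono[OF K(2) chi_prod(1)[OF Ih] pt])
  also have "\<dots> = T * (2*Bf*4)" using chi_prod(2)[OF Ih] inth unfolding T_def by simp
  finally have Y: "(\<integral>z. indicator {z. fst z > 0} z * (kflux f (w (fst z) (snd z)) far * (chi (fst z) * ps' s R e (snd z))) \<partial>lborel)
      \<le> 8*Bf*T" by (simp add: mult.commute)
  have I: "(\<integral>x. \<bar>u0 x - far\<bar> * (chi 0 * ps s R e x) \<partial>lborel) \<le> chi 0 * \<bar>nr - far\<bar> * e"
    by (rule init_bound[OF s R e u0m u0far u0v])
  show ?thesis using K(3) Y I unfolding T_def by linarith
qed




lemma pt_main:
  fixes q c c' P I1 P2 Wd \<delta> Cq s R :: real
  assumes s: "s = 1 \<or> s = -1" and R: "0 < R"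
    and c: "0 \<le> c" "c \<le> 2 * (- c')" and P: "0 \<le> P" "P \<le> (2/R) * I1"
    and I1: "I1 = 0 \<or> I1 = 1" and P2: "I1 = 1 \<Longrightarrow> P2 = 1" "0 \<le> P2"
    and q: "\<bar>q\<bar> \<le> \<delta> + Cq * Wd" and Wd: "0 \<le> Wd" and Cq: "0 \<le> Cq"
  shows "q * (c * (s * P)) \<le> c * (\<delta> * ((2/R) * I1)) - (4*Cq/R) * (Wd * (c' * P2))"
proof -
  have "q * (c * (s * P)) \<le> \<bar>q * (c * (s * P))\<bar>" by (rule abs_ge_self)
  also have "\<dots> = \<bar>q\<bar> * (c * P)" using c P s by (auto simp: abs_mult)
  also have "\<dots> \<le> (\<delta> + Cq * Wd) * (c * ((2/R) * I1))"
    using q c P by (intro mult_mono mult_left_mono) auto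
  also have "\<dots> = c * (\<delta> * ((2/R) * I1)) + (Cq * Wd * (2/R)) * (c * I1)" by (simp add: algebra_simps add_divide_distrib)
  also have "(Cq * Wd * (2/R)) * (c * I1) \<le> (Cq * Wd * (2/R)) * (2 * (- c') * P2)"
  proof (rule mult_left_mono)
    show "c * I1 \<le> 2 * (- c') * P2"
    proof -
      have "0 \<le> - c'" using c by linarith
      then have "0 \<le> 2 * (- c') * P2" using P2(2) by (intro mult_nonneg_nonneg) auto
      then show ?thesis using I1 P2 c by auto
    qed
    show "0 \<le> Cq * Wd * (2/R)" using Cq Wd R by simp
  qed
  also have "(Cq * Wd * (2/R)) * (2 * (- c') * P2) = - (4*Cq/R) * (Wd * (c' * P2))" by (simp add: algebra_simps)
  finally show ?thesis by simp
qed


lemma stepB: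
  fixes f :: "real \<Rightarrow> real" and U :: "real set" and u0 :: "real \<Rightarrow> real"
  assumes sol: "kruzhkov_sol f U w u0" and U: "closed U" and fc: "continuous_on U f" and farU: "far \<in> U"
    and s: "s = 1 \<or> s = -1"
    and u0m: "u0 \<in> borel_measurable borel"
    and u0far: "\<And>x. s * x < 0 \<Longrightarrow> u0 x = far"
    and u0v: "\<And>x. u0 x = far \<or> u0 x = nr"
    and ae: "AE z in lborel. fst z > 0 \<and> s * snd z > 0 \<longrightarrow> w (fst z) (snd z) = nr"
    and R: "0 < R" and e: "0 < e"
    and Bf: "\<And>t x. \<bar>kflux f (w t x) far\<bar> \<le> 2*Bf"
    and qd: "\<And>t x. \<bar>kflux f (w t x) far\<bar> \<le> \<delta> + Cq * \<bar>w t x - far\<bar>" and Cq: "0 \<le> Cq" and \<delta>: "0 \<le> \<delta>"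
  shows "s * kflux f nr far * (\<integral>t. indicator {0<..} t * chi t \<partial>lborel)
     \<le> 2*\<delta>*(\<integral>t. indicator {0<..} t * chi t \<partial>lborel)
       + (4*Cq/R) * (8*Bf*(\<integral>t. indicator {0<..} t * chi t \<partial>lborel) + chi 0 * \<bar>nr - far\<bar> * e)
       + chi 0 * \<bar>nr - far\<bar> * e"
proof -
  define T where "T = (\<integral>t. indicator {0<..} t * chi t \<partial>lborel)"
  have R2: "0 < 2*R" using R by simp
  note K1 = kr_split[where A=4 and B="2*R+e" and Cc=2 and Cp="1 + 2/R + 2/e", OF sol farU U fc chi_c1(1-4) ps_c1(1-4)[OF R e s] chi_c1(5,6) ps_c1(5,6)[OF R e s]]
  note K2 = kr_split[where A=4 and B="2*(2*R)+e" and Cc=2 and Cp="1 + 2/(2*R) + 2/e", OF sol farU U fc chi_c1(1-4) ps_c1(1-4)[OF R2 e s] chi_c1(5,6) ps_c1(5,6)[OF R2 e s]]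
  have A: "- (\<integral>z. indicator {z. fst z > 0} z * (\<bar>w (fst z) (snd z) - far\<bar> * (chi' (fst z) * ps s (2*R) e (snd z))) \<partial>lborel)
     \<le> 8*Bf*T + chi 0 * \<bar>nr - far\<bar> * e"
    unfolding T_def by (rule stepA[OF sol U fc farU s u0m u0far u0v R2 e Bf])
  define X2 where "X2 = (\<integral>z. indicator {z. fst z > 0} z * (\<bar>w (fst z) (snd z) - far\<bar> * (chi' (fst z) * ps s (2*R) e (snd z))) \<partial>lborel)"
  have X1: "(\<integral>z. indicator {z. fst z > 0} z * (\<bar>w (fst z) (snd z) - far\<bar> * (chi' (fst z) * ps s R e (snd z))) \<partial>lborel) \<le> 0"
  proof -
    have "(\<integral>z. indicator {z. fst z > 0} z * (\<bar>w (fst z) (snd z) - far\<bar> * (chi' (fst z) * ps s R e (snd z))) \<partial>lborel)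
        \<le> (\<integral>z. 0 \<partial>(lborel::(real\<times>real) measure))"
    proof (rule Bochner_Integration.integral_mono[OF K1(1)])
      fix z :: "real\<times>real"
      show "indicator {z. fst z > 0} z * (\<bar>w (fst z) (snd z) - far\<bar> * (chi' (fst z) * ps s R e (snd z))) \<le> 0"
      proof (cases "fst z > 0")
        case True
        have "chi' (fst z) \<le> 0" using chi_props(1)[of "fst z"] True by simp
        moreover have "0 \<le> ps s R e (snd z)" by (rule ps_c1(3)[OF R e s])
        ultimately have "chi' (fst z) * ps s R e (snd z) \<le> 0" by (simp add: mult_nonpos_nonneg)
        then show ?thesis using True by (simp add: indicator_def mult_nonneg_nonpos)
      qed (simp add: indicator_def)
    qed auto
    then show ?thesis by simp
  qed
  have I0: "(\<integral>x. \<bar>u0 x - far\<bar> * (chi 0 * ps s R e x) \<partial>lborel) \<le> chi 0 * \<bar>nr - far\<bar> * e"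
    by (rule init_bound[OF s R e u0m u0far u0v])
  define h1 where "h1 = (\<lambda>x. \<delta> * ((2/R) * indicator {-2*R..-R} (s*x)) :: real)"
  define h3 where "h3 = (\<lambda>x. kflux f nr far * s * (indicator {0<..} (s*x) * psi' R e (s*x)))"
  have Ih1: "integrable lborel h1" unfolding h1_def using ind_Icc_int(1)[OF s, of "-2*R" "-R"] R by simp
  have inth1: "(\<integral>x. h1 x \<partial>lborel) = 2 * \<delta>"
    unfolding h1_def using ind_Icc_int(2)[OF s, of "-2*R" "-R"] R by simp
  have Ih3: "integrable lborel h3" unfolding h3_def using psi'_sig_int(1)[OF s R e] by simp
  have inth3: "(\<integral>x. h3 x \<partial>lborel) = - (kflux f nr far * s)"
    unfolding h3_def using psi'_sig_int(2)[OF s R e] by simp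
  define G where "G = (\<lambda>z::real\<times>real. (indicator {0<..} (fst z) * chi (fst z)) * h1 (snd z)
     + (indicator {0<..} (fst z) * chi (fst z)) * h3 (snd z)
     - (4*Cq/R) * (indicator {z. fst z > 0} z * (\<bar>w (fst z) (snd z) - far\<bar> * (chi' (fst z) * ps s (2*R) e (snd z)))))"
  have IG: "integrable lborel G" unfolding G_def
    using chi_prod(1)[OF Ih1] chi_prod(1)[OF Ih3] K2(1) by simp
  have intG: "(\<integral>z. G z \<partial>lborel) = T * (2*\<delta>) + T * (- (kflux f nr far * s)) - (4*Cq/R) * X2"
    unfolding G_def X2_def T_def
    using chi_prod[OF Ih1] chi_prod[OF Ih3] K2(1) inth1 inth3 by simp
  have AEG: "AE z in lborel. indicator {z. fst z > 0} z * (kflux f (w (fst z) (snd z)) far * (chi (fst z) * ps' s R e (snd z))) \<le> G z"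
    using ae
  proof eventually_elim
    fix z :: "real\<times>real"
    assume ev: "fst z > 0 \<and> s * snd z > 0 \<longrightarrow> w (fst z) (snd z) = nr"
    obtain t x where z: "z = (t, x)" by (cases z)
    define y where "y = s * x"
    show "indicator {z. fst z > 0} z * (kflux f (w (fst z) (snd z)) far * (chi (fst z) * ps' s R e (snd z))) \<le> G z"
    proof (cases "t > 0")
      case False
      then show ?thesis unfolding G_def z by (simp add: indicator_def)
    next
      case True
      have c: "0 \<le> chi t" "chi t \<le> 2 * (- chi' t)" "chi' t \<le> 0" using chi_nonneg chi_props[of t] True by auto
      have P2: "0 \<le> ps s (2*R) e x" by (rule ps_c1(3)[OF R2 e s])
      have x2: "\<bar>w t x - far\<bar> * (chi' t * ps s (2*R) e x) \<le> 0"
        using c(3) P2 by (simp add: mult_nonneg_nonpos mult_nonpos_nonneg)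
      have h1p: "0 \<le> chi t * h1 x" unfolding h1_def using c(1) \<delta> R by simp
      have Gz: "G z = chi t * h1 x + chi t * h3 x - (4*Cq/R) * (\<bar>w t x - far\<bar> * (chi' t * ps s (2*R) e x))"
        unfolding G_def z using True by simp
      have Yz: "indicator {z. fst z > 0} z * (kflux f (w (fst z) (snd z)) far * (chi (fst z) * ps' s R e (snd z)))
          = kflux f (w t x) far * (chi t * (s * psi' R e y))"
        unfolding z ps'_def y_def using True by simp
      have cq: "0 \<le> - (4*Cq/R) * (\<bar>w t x - far\<bar> * (chi' t * ps s (2*R) e x))"
      proof -
        have "0 \<le> 4*Cq/R" using Cq R by simp
        then have "(4*Cq/R) * (\<bar>w t x - far\<bar> * (chi' t * ps s (2*R) e x)) \<le> 0"
          using x2 by (rule mult_nonneg_nonpos)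
        then show ?thesis by linarith
      qed
      consider "y < 0" | "y = 0" | "y > 0" by linarith
      then show ?thesis
      proof cases
        case 1
        have h3z: "h3 x = 0" unfolding h3_def y_def[symmetric] using 1 by (simp add: indicator_def)
        have "kflux f (w t x) far * (chi t * (s * psi' R e y))
            \<le> chi t * (\<delta> * ((2/R) * indicator {-2*R..-R} y)) - (4*Cq/R) * (\<bar>w t x - far\<bar> * (chi' t * ps s (2*R) e x))"
        proof (rule pt_main[OF s R c(1,2)])
          show "0 \<le> psi' R e y" "psi' R e y \<le> (2/R) * indicator {-2*R..-R} y"
            using psi'_left_bound[OF R e, of y] 1 by auto
          show "indicator {-2*R..-R} y = 0 \<or> indicator {-2*R..-R} y = (1::real)" by (simp add: indicator_def)
          show "ps s (2*R) e x = 1" if "indicator {-2*R..-R} y = (1::real)"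
          proof -
            have "y \<in> {-2*R..-R}" using that by (simp add: indicator_def split: if_splits)
            then show ?thesis unfolding ps_def y_def[symmetric] using psi_one[OF R2 e, of y] R by auto
          qed
          show "0 \<le> ps s (2*R) e x" by (rule P2)
          show "\<bar>kflux f (w t x) far\<bar> \<le> \<delta> + Cq * \<bar>w t x - far\<bar>" by (rule qd)
        qed (use Cq in auto)
        then show ?thesis unfolding Yz Gz h3z h1_def y_def by simp
      next
        case 2
        then have "psi' R e y = 0" using psi'_0[OF R e] by simp
        moreover have "h3 x = 0" unfolding h3_def y_def[symmetric] using 2 by (simp add: indicator_def)
        ultimately show ?thesis unfolding Yz Gz using h1p cq by simp
      next
        case 3
        then have "w t x = nr" using ev True unfolding z y_def by simp
        moreover have "h3 x = kflux f nr far * s * psi' R e y" unfolding h3_def y_def[symmetric] using 3 by (simp add: indicator_def)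
        ultimately show ?thesis unfolding Yz Gz using h1p cq by (simp add: algebra_simps)
      qed
    qed
  qed
  have Y1: "(\<integral>z. indicator {z. fst z > 0} z * (kflux f (w (fst z) (snd z)) far * (chi (fst z) * ps' s R e (snd z))) \<partial>lborel)
      \<le> (\<integral>z. G z \<partial>lborel)"
    by (rule integral_mono_AE[OF K1(2) IG AEG])
  have "0 \<le> T * (2*\<delta>) + T * (- (kflux f nr far * s)) - (4*Cq/R) * X2 + chi 0 * \<bar>nr - far\<bar> * e"
    using K1(3) X1 Y1 I0 intG by linarith
  moreover have "- (4*Cq/R) * X2 \<le> (4*Cq/R) * (8*Bf*T + chi 0 * \<bar>nr - far\<bar> * e)"
    using mult_left_mono[OF A[folded X2_def], of "4*Cq/R"] Cq R by simp
  ultimately show ?thesis unfolding T_def[symmetric] by (simp add: algebra_simps)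
qed




lemma conn_ineq:
  fixes f :: "real \<Rightarrow> real" and U :: "real set" and u0 :: "real \<Rightarrow> real"
  assumes sol: "kruzhkov_sol f U w u0" and U: "closed U" and fc: "continuous_on U f" and farU: "far \<in> U"
    and s: "s = 1 \<or> s = -1"
    and u0m: "u0 \<in> borel_measurable borel"
    and u0far: "\<And>x. s * x < 0 \<Longrightarrow> u0 x = far"
    and u0v: "\<And>x. u0 x = far \<or> u0 x = nr"
    and ae: "AE z in lborel. fst z > 0 \<and> s * snd z > 0 \<longrightarrow> w (fst z) (snd z) = nr"
  shows "s * kflux f far nr \<le> 0"
proof (rule ccontr)
  assume "\<not> s * kflux f far nr \<le> 0"
  then have p0: "0 < s * kflux f far nr" by simp
  define p where "p = s * kflux f far nr"
  have p: "0 < p" using p0 by (simp add: p_def)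
  have wU: "\<And>t x. w t x \<in> U" using sol unfolding kruzhkov_sol_def by auto
  obtain M where M: "\<And>t x. \<bar>w t x\<bar> \<le> M" using sol unfolding kruzhkov_sol_def by auto
  obtain Bf where Bf0: "\<And>v. v \<in> U \<Longrightarrow> \<bar>v\<bar> \<le> max M \<bar>far\<bar> \<Longrightarrow> \<bar>f v\<bar> \<le> Bf"
    using f_bounded[OF U fc, of "max M \<bar>far\<bar>"] by auto
  have fw: "\<bar>f (w t x)\<bar> \<le> Bf" for t x using Bf0[OF wU[of t x]] M[of t x] by simp
  have ff: "\<bar>f far\<bar> \<le> Bf" using Bf0[OF farU] by simp
  have Bf: "\<bar>kflux f (w t x) far\<bar> \<le> 2*Bf" for t x by (rule kflux_bound[of f "w t x" Bf far, OF fw ff])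
  have Bfnn: "0 \<le> Bf" using ff by simp
  define T where "T = (\<integral>t. indicator {0<..} t * chi t \<partial>lborel)"
  have T: "25/81 \<le> T" unfolding T_def by (rule chi_int(2))
  then have Tp: "0 < T" by simp
  define \<delta> where "\<delta> = p / 8"
  have \<delta>: "0 < \<delta>" using p by (simp add: \<delta>_def)
  obtain \<eta> where \<eta>: "0 < \<eta>" and \<eta>c: "\<And>y. y \<in> U \<Longrightarrow> \<bar>y - far\<bar> < \<eta> \<Longrightarrow> \<bar>f y - f far\<bar> < \<delta>"
    using fc farU \<delta> unfolding continuous_on_iff dist_real_def by metis
  define Cq where "Cq = 2*Bf/\<eta>"
  have Cq: "0 \<le> Cq" unfolding Cq_def using Bfnn \<eta> by simp
  have qd: "\<bar>kflux f (w t x) far\<bar> \<le> \<delta> + Cq * \<bar>w t x - far\<bar>" for t x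
  proof (cases "\<bar>w t x - far\<bar> < \<eta>")
    case True
    have "\<bar>kflux f (w t x) far\<bar> \<le> \<bar>f (w t x) - f far\<bar>"
      unfolding kflux_def by (simp add: abs_mult sgn_real_def)
    also have "\<dots> < \<delta>" using \<eta>c[OF wU True] .
    finally show ?thesis using Cq by (smt (verit) abs_ge_zero mult_nonneg_nonneg)
  next
    case False
    have "2*Bf = Cq * \<eta>" unfolding Cq_def using \<eta> by simp
    also have "\<dots> \<le> Cq * \<bar>w t x - far\<bar>" using False Cq by (intro mult_left_mono) auto
    finally show ?thesis using Bf[of t x] \<delta> by linarith
  qed
  define D where "D = chi 0 * \<bar>nr - far\<bar>"
  have D: "0 \<le> D" unfolding D_def using chi_nonneg[of 0] by simp
  define e where "e = min 1 (p*T/(4*(D+1)))"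
  have e: "0 < e" "e \<le> 1" unfolding e_def using p Tp D by auto
  have De: "D * e \<le> p*T/4"
  proof -
    have "D * e \<le> D * (p*T/(4*(D+1)))" unfolding e_def using D by (intro mult_left_mono) auto
    also have "\<dots> = (p*T/4) * (D/(D+1))" using D by (simp add: field_simps)
    also have "\<dots> \<le> (p*T/4) * 1" using D p Tp by (intro mult_left_mono) auto
    finally show ?thesis by simp
  qed
  define K0 where "K0 = 8*Bf*T + D"
  have K0: "8*Bf*T + D * e \<le> K0" unfolding K0_def using D e by (simp add: mult_left_le)
  define R where "R = 16*Cq*K0/(p*T) + 1"
  have K0nn: "0 \<le> K0" unfolding K0_def using Bfnn Tp D by simp
  have R: "0 < R" unfolding R_def using Cq K0nn p Tp by (intro add_nonneg_pos divide_nonneg_pos mult_nonneg_nonneg mult_pos_pos) auto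
  have CR: "(4*Cq/R) * (8*Bf*T + D * e) \<le> p*T/4"
  proof -
    have "(4*Cq/R) * (8*Bf*T + D * e) \<le> (4*Cq/R) * K0" using K0 Cq R by (intro mult_left_mono) auto
    also have "\<dots> \<le> p*T/4"
    proof -
      have "16*Cq*K0 \<le> p*T*R" unfolding R_def using p Tp by (simp add: field_simps)
      then show ?thesis using R by (simp add: field_simps)
    qed
    finally show ?thesis .
  qed
  have B: "s * kflux f nr far * T \<le> 2*\<delta>*T + (4*Cq/R) * (8*Bf*T + chi 0 * \<bar>nr - far\<bar> * e) + chi 0 * \<bar>nr - far\<bar> * e"
    unfolding T_def
    by (rule stepB[OF sol U fc farU s u0m u0far u0v ae R e(1) Bf qd Cq less_imp_le[OF \<delta>]])
  have e1: "s * kflux f nr far * T = p * T" unfolding p_def by (simp add: kflux_sym[of f nr far])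
  have e2: "chi 0 * \<bar>nr - far\<bar> * e = D * e" unfolding D_def by simp
  have "p * T \<le> 2*\<delta>*T + (4*Cq/R) * (8*Bf*T + D * e) + D * e"
    using B unfolding e1 e2 .
  then have "p * T \<le> 2*\<delta>*T + p*T/4 + p*T/4"
    using CR De by linarith
  then have "p * T \<le> 3*(p*T)/4" unfolding \<delta>_def by simp
  moreover have "0 < p * T" using p Tp by simp
  ultimately show False by linarith
qed




lemma kflux_zero: "kflux f a b = 0 \<Longrightarrow> f a = f b"
  unfolding kflux_def by (cases "a = b") (auto simp: sgn_real_def split: if_splits)

lemma kflux_self: "kflux f a a = 0" unfolding kflux_def by simp

lemma kflux_cont:
  fixes g :: "real \<Rightarrow> real"
  assumes "continuous_on U g"
  shows "continuous_on U (\<lambda>z. kflux g z x)"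
proof -
  have eq: "(\<lambda>z. kflux g z x) = (\<lambda>z. if z - x \<le> 0 then g x - g z else g z - g x)"
    by (auto simp: fun_eq_iff kflux_def sgn_real_def)
  show ?thesis unfolding eq
  proof (rule continuous_on_cases_le)
    show "continuous_on {z \<in> U. z - x \<le> 0} (\<lambda>z. g x - g z)"
      by (intro continuous_intros continuous_on_subset[OF assms]) auto
    show "continuous_on {z \<in> U. 0 \<le> z - x} (\<lambda>z. g z - g x)"
      by (intro continuous_intros continuous_on_subset[OF assms]) auto
    show "continuous_on U (\<lambda>z. z - x)" by (intro continuous_intros)
  qed auto
qed

lemma contact_eq:
  fixes f :: "real \<Rightarrow> real"
  assumes cs: "contact_shock f U a b" and U: "closed U" and fc: "continuous_on U f"
  shows "f a = f b"
proof -
  have ab: "a \<in> U" "b \<in> U" using cs unfolding contact_shock_def by auto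
  have "kflux f b a \<le> kflux f a a" by (rule contact_ineq[OF cs U fc ab(1)])
  moreover have "kflux f b b \<le> kflux f a b" by (rule contact_ineq[OF cs U fc ab(2)])
  ultimately have "kflux f a b = 0" using kflux_sym[of f a b] kflux_self[of f] by simp
  then show ?thesis by (rule kflux_zero)
qed

lemma H0_closed_germ:
  fixes fl fr :: "real \<Rightarrow> real" and U :: "real set" and G :: "(real \<times> real) set"
  assumes U: "closed U" and cl: "continuous_on U fl" and cr: "continuous_on U fr"
    and L: "L1D fl fr U G"
  defines "H0 \<equiv> {p \<in> U \<times> U. fl (fst p) = fr (snd p) \<and> (\<forall>(x,y)\<in>G. kflux fr (snd p) y \<le> kflux fl (fst p) x)}"
  shows "closed_germ fl fr U H0" "G \<subseteq> H0"
proof -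
  have gG: "germ fl fr U G" using L unfolding L1D_def by simp
  show "G \<subseteq> H0"
    using L gG unfolding L1D_def germ_def H0_def by fastforce
  define A0 where "A0 = (U \<times> U) \<inter> (\<lambda>p. fl (fst p) - fr (snd p)) -` {0}"
  define Ag where "Ag = (\<lambda>(x,y). (U \<times> U) \<inter> (\<lambda>p. kflux fl (fst p) x - kflux fr (snd p) y) -` {0..})"
  have HI: "H0 = \<Inter> (insert A0 (Ag ` G))"
    unfolding H0_def A0_def Ag_def by auto
  have cfst: "continuous_on (U \<times> U) (\<lambda>p. g (fst p))" if "continuous_on U g" for g :: "real \<Rightarrow> real"
    by (rule continuous_on_compose2[OF that]) (auto intro: continuous_intros)
  have csnd: "continuous_on (U \<times> U) (\<lambda>p. g (snd p))" if "continuous_on U g" for g :: "real \<Rightarrow> real"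
    by (rule continuous_on_compose2[OF that]) (auto intro: continuous_intros)
  have "closedin (top_of_set (U \<times> U)) H0"
    unfolding HI
  proof (rule closedin_Inter)
    fix S assume "S \<in> insert A0 (Ag ` G)"
    then consider "S = A0" | x y where "(x,y) \<in> G" "S = Ag (x,y)" by auto
    then show "closedin (top_of_set (U \<times> U)) S"
    proof cases
      case 1
      show ?thesis unfolding 1 A0_def
        by (rule continuous_closedin_preimage) (auto intro!: continuous_intros cfst[OF cl] csnd[OF cr])
    next
      case 2
      show ?thesis unfolding 2 Ag_def
        by (simp, rule continuous_closedin_preimage)
          (auto intro!: continuous_intros cfst[OF kflux_cont[OF cl]] csnd[OF kflux_cont[OF cr]])
    qed
  qed auto
  moreover have "germ fl fr U H0" unfolding germ_def H0_def by auto
  moreover have "(a,d) \<in> H0" if bc: "(b,c) \<in> H0" and s1: "contact_shock fl U a b" and s2: "contact_shock fr U c d" for a b c d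
  proof -
    have ad: "a \<in> U" "d \<in> U" using s1 s2 unfolding contact_shock_def by auto
    have e1: "fl a = fl b" by (rule contact_eq[OF s1 U cl])
    have e2: "fr c = fr d" by (rule contact_eq[OF s2 U cr])
    have "fl b = fr c" using bc unfolding H0_def by simp
    then have "fl a = fr d" using e1 e2 by simp
    moreover have "kflux fr d y \<le> kflux fl a x" if xy: "(x,y) \<in> G" for x y
    proof -
      have xyU: "x \<in> U" "y \<in> U" using xy gG unfolding germ_def by auto
      have "kflux fr d y \<le> kflux fr c y" by (rule contact_ineq[OF s2 U cr xyU(2)])
      also have "\<dots> \<le> kflux fl b x" using bc xy unfolding H0_def by auto
      also have "\<dots> \<le> kflux fl a x" by (rule contact_ineq[OF s1 U cl xyU(1)])
      finally show ?thesis .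
    qed
    ultimately show ?thesis unfolding H0_def using ad by auto
  qed
  ultimately show "closed_germ fl fr U H0" unfolding closed_germ_def by blast
qed

theorem proposition4p6:
  fixes U :: "real set" and fl fr :: "real \<Rightarrow> real" and G :: "(real \<times> real) set"
    and ul ur um up :: real
  assumes "closed U" and "is_interval U" and "U \<noteq> {}"
    and "continuous_on U fl" and "continuous_on U fr"
    and "L1D fl fr U G"
    and "(ul, ur) \<in> G"
    and "um \<in> U" and "up \<in> U"
    and "connects_left fl U um ul"
    and "connects_right fr U ur up"
    and "(um, up) \<in> germ_closure fl fr U G"
  shows "fl um = fr up \<and> fr up = fl ul \<and> fl ul = fr ur"
proof -
  note U = assms(1) and cl = assms(4) and cr = assms(5) and L = assms(6) and G = assms(7)
  define H0 where "H0 = {p \<in> U \<times> U. fl (fst p) = fr (snd p) \<and> (\<forall>(x,y)\<in>G. kflux fr (snd p) y \<le> kflux fl (fst p) x)}"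
  have "closed_germ fl fr U H0" "G \<subseteq> H0" unfolding H0_def by (rule H0_closed_germ[OF U cl cr L])+
  then have "germ_closure fl fr U G \<subseteq> H0" unfolding germ_closure_def by blast
  then have "(um, up) \<in> H0" using assms(12) by blast
  then have h1: "fl um = fr up" and h2: "kflux fr up ur \<le> kflux fl um ul"
    unfolding H0_def using G by auto
  have gr: "fl ul = fr ur" using L G unfolding L1D_def germ_def by auto
  obtain w1 where w1: "kruzhkov_sol fl U w1 (step um ul)"
    "AE z in lborel. fst z > 0 \<and> snd z > 0 \<longrightarrow> w1 (fst z) (snd z) = ul"
    using assms(10) unfolding connects_left_def by blast
  obtain w2 where w2: "kruzhkov_sol fr U w2 (step ur up)"
    "AE z in lborel. fst z > 0 \<and> snd z < 0 \<longrightarrow> w2 (fst z) (snd z) = ur"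
    using assms(11) unfolding connects_right_def by blast
  have l: "1 * kflux fl um ul \<le> 0"
  proof (rule conn_ineq[OF w1(1) U cl assms(8)])
    show "(1::real) = 1 \<or> (1::real) = -1" by simp
    show "step um ul \<in> borel_measurable borel" by (rule step_meas)
    show "\<And>x. 1 * x < 0 \<Longrightarrow> step um ul x = um" by (simp add: step_def)
    show "\<And>x. step um ul x = um \<or> step um ul x = ul" by (simp add: step_def)
    show "AE z in lborel. fst z > 0 \<and> 1 * snd z > 0 \<longrightarrow> w1 (fst z) (snd z) = ul" using w1(2) by simp
  qed
  have r: "-1 * kflux fr up ur \<le> 0"
  proof (rule conn_ineq[OF w2(1) U cr assms(9)])
    show "(-1::real) = 1 \<or> (-1::real) = -1" by simp
    show "step ur up \<in> borel_measurable borel" by (rule step_meas)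
    show "\<And>x. -1 * x < 0 \<Longrightarrow> step ur up x = up" by (simp add: step_def)
    show "\<And>x. step ur up x = up \<or> step ur up x = ur" by (simp add: step_def)
    show "AE z in lborel. fst z > 0 \<and> -1 * snd z > 0 \<longrightarrow> w2 (fst z) (snd z) = ur" using w2(2) by simp
  qed
  have "kflux fl um ul = 0" using l r h2 by simp
  then have "fl um = fl ul" by (rule kflux_zero)
  then show ?thesis using h1 gr by simp
qed


end
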